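(* Define rational functions of $\xi\in\mathbb C$ by $c_0=\frac1{\xi+10}$, $d_0=\frac{\xi+23}{(\xi+13)(\xi+10)}$, and for $j\ge1$, $v_j=(c_j,d_j)^T=N_jv_{j-1}$ with $$N_j=\begin{pmatrix}8j+10+\xi&0\\-13&8j+13+\xi\end{pmatrix}^{-1}\begin{pmatrix}8(j-1)&10\\0&8(j-1)\end{pmatrix}.$$ Let $\mathring c_0=\mathfrak F^{-1}(\frac{c_0}{d_0}-1)$, $\mathring d_0=0$, and $(\mathring c_j,\mathring d_j)=\mathfrak F^{-1}\big(\frac1{d_0}(c_j,d_j)\big)$ for $j\ge1$. Let $\mathring w_1,\mathring w_2$ solve on $[0,\infty)_t\times[0,\infty)_\gamma$ $$\partial_t\mathring w_1-4\gamma\partial_\gamma\mathring w_1+10\mathring w_1-\frac{10}{1+\gamma^2}\mathring w_2=130e^{-23t},\qquad \partial_t\mathring w_2-4\gamma\partial_\gamma\mathring w_2+13\mathring w_2-13\mathring w_1=130e^{-23t},$$ with $\mathring w_1(0)=-10\frac{\gamma^2}{1+\gamma^2}$, $\mathring w_2(0)=0$. Then each $\mathring c_k,\mathring d_k$ decays faster than $e^{-t}$ as $t\to\infty$, and for every integer $M\ge2$, with $A_M:=\sum_{j=1}^M\mathring c_j(t)(1+\gamma^2)^{-j}$, $B_M:=\sum_{j=1}^M\mathring d_j(t)(1+\gamma^2)^{-j}$, the errors $\alpha:=\mathring w_1-A_M$, $\beta:=\mathring w_2-B_M$ satisfy $$\partial_t\alpha-4\gamma\partial_\gamma\alpha+10\alpha-\frac{10}{1+\gamma^2}\beta=\frac{P_M(t)}{(1+\gamma^2)^{M+1}},\qquad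 \partial_t\beta-4\gamma\partial_\gamma\beta+13\beta-13\alpha=\frac{Q_M(t)}{(1+\gamma^2)^{M+1}},$$ where $P_M=8M\mathring c_M+10\mathring d_M$ and $Q_M=8M\mathring d_M$.
   Context: $\hat f(\xi)=\int_0^\infty e^{-\xi t}f(t)dt$ is the Laplace transform and $\mathfrak F^{-1}$ the inverse Laplace transform (applied componentwise). *)

theory Defs
  imports "HOL-Analysis.Analysis"
begin

text \<open>The inverse of the lower triangular matrix is written out
  as adjugate divided by determinant: (1/(a b)) [[b,0],[13,a]].\<close>

fun cdvec :: "nat \<Rightarrow> complex \<Rightarrow> complex \<times> complex" where
  "cdvec 0 \<xi> = (1 / (\<xi> + 10), (\<xi> + 23) / ((\<xi> + 13) * (\<xi> + 10)))"
| "cdvec (Suc j) \<xi> =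
     (let c = fst (cdvec j \<xi>); d = snd (cdvec j \<xi>);
          x = of_nat (8 * j) * c + 10 * d;
          y = of_nat (8 * j) * d;
          a = of_nat (8 * Suc j) + 10 + \<xi>;
          b = of_nat (8 * Suc j) + 13 + \<xi>
      in (b * x / (a * b), (13 * x + a * y) / (a * b)))"

definition cfun :: "nat \<Rightarrow> complex \<Rightarrow> complex" where
  "cfun j \<xi> = fst (cdvec j \<xi>)"

definition dfun :: "nat \<Rightarrow> complex \<Rightarrow> complex" where
  "dfun j \<xi> = snd (cdvec j \<xi>)"

text \<open>f (a continuous function on [0,oo)) is the inverse Laplace transform of R:
  for all xi in some right half-plane, the integral over [0,oo) of exp(-xi t) f(t)
  exists and equals R xi.  Continuity makes f unique (Lerch).\<close>

definition is_inverse_laplace :: "(real \<Rightarrow> real) \<Rightarrow> (complex \<Rightarrow> complex) \<Rightarrow> bool" where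
  "is_inverse_laplace f R \<longleftrightarrow>
     continuous_on {0..} f \<and>
     (\<exists>\<sigma>::real. \<forall>\<xi>::complex. \<sigma> < Re \<xi> \<longrightarrow>
        ((\<lambda>t. exp (- (\<xi> * of_real t)) * of_real (f t)) has_integral R \<xi>) {0..})"

end

theory Submission
  imports Defs
begin


definition LT :: "(real \<Rightarrow> real) \<Rightarrow> real \<Rightarrow> real \<Rightarrow> bool" where
  "LT g x L \<longleftrightarrow> ((\<lambda>T. integral {0..T} (\<lambda>t. exp (-(x*t)) * g t)) \<longlongrightarrow> L) at_top"

lemma has_integral_halfline_lim:
  fixes f :: "real \<Rightarrow> real"
  assumes "(f has_integral I) {0..}"
  shows "((\<lambda>T. integral {0..T} f) \<longlongrightarrow> I) at_top"
proof (rule tendstoI)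
  fix e :: real assume e: "e > 0"
  from assms[unfolded has_integral_alt'] e obtain B where B: "B > 0"
    "\<And>a b. ball 0 B \<subseteq> cbox a b \<Longrightarrow>
       norm (integral (cbox a b) (\<lambda>x. if x \<in> {0..} then f x else 0) - I) < e"
    by blast
  show "\<forall>\<^sub>F T in at_top. dist (integral {0..T} f) I < e"
    unfolding eventually_at_top_linorder
  proof (intro exI allI impI)
    fix T assume T: "T \<ge> B"
    have "ball 0 B \<subseteq> cbox (-T) T" using T by (auto simp: dist_real_def)
    from B(2)[OF this] have "norm (integral (cbox (-T) T) (\<lambda>x. if x \<in> {0..} then f x else 0) - I) < e" .
    moreover have "integral (cbox (-T) T) (\<lambda>x. if x \<in> {0..} then f x else 0) = integral {0..T} f"
    proof -
      have "{0::real..} \<inter> cbox (-T) T = {0..T}" using T B by auto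
      then show ?thesis using integral_restrict_Int[of "cbox (-T) T" "{0..}" f] T B(1) by simp
    qed
    ultimately show "dist (integral {0..T} f) I < e" by (simp add: dist_norm)
  qed
qed

lemma at_within_halfline:
  fixes t :: real assumes "t \<ge> 0" "t < b"
  shows "at t within {0..} = at t within {0..b}"
  by (rule at_within_nhd[where S="{..<b}"]) (use assms in auto)

lemma indef_integral_deriv:
  fixes g :: "real \<Rightarrow> real"
  assumes "continuous_on {0..} g" "t \<ge> 0"
  shows "((\<lambda>s. integral {0..s} g) has_real_derivative g t) (at t within {0..})"
proof -
  have "continuous_on {0..t+1} g" using assms(1) by (rule continuous_on_subset) auto
  from integral_has_real_derivative[OF this, of t] assms(2)
  show ?thesis by (simp add: at_within_halfline[of t "t+1"] assms)
qed

lemma indef_integral_cont: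
  fixes g :: "real \<Rightarrow> real"
  assumes "continuous_on {0..} g"
  shows "continuous_on {0..} (\<lambda>s. integral {0..s} g)"
  unfolding continuous_on_eq_continuous_within
  using indef_integral_deriv[OF assms] DERIV_continuous by (metis atLeast_iff)

lemma int_cont:
  fixes g :: "real \<Rightarrow> real"
  assumes "continuous_on {0..} g"
  shows "g integrable_on {0..T}"
  by (rule integrable_continuous_interval, rule continuous_on_subset[OF assms]) auto

lemma bounded_of_lim:
  fixes H :: "real \<Rightarrow> real"
  assumes "continuous_on {0..} H" "(H \<longlongrightarrow> L) at_top"
  shows "\<exists>B. \<forall>t\<ge>0. \<bar>H t\<bar> \<le> B"
proof -
  from assms(2) have "\<forall>\<^sub>F t in at_top. dist (H t) L < 1" by (rule tendstoD) simp
  then obtain T0 where T0: "\<And>t. t \<ge> T0 \<Longrightarrow> dist (H t) L < 1" by (auto simp: eventually_at_top_linorder)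
  have "compact (H ` {0..max T0 0})"
    by (rule compact_continuous_image, rule continuous_on_subset[OF assms(1)]) auto
  then obtain B1 where B1: "\<And>y. y \<in> H ` {0..max T0 0} \<Longrightarrow> norm y \<le> B1"
    using compact_imp_bounded bounded_iff by metis
  show ?thesis
  proof (intro exI allI impI)
    fix t :: real assume t: "t \<ge> 0"
    show "\<bar>H t\<bar> \<le> max B1 (\<bar>L\<bar> + 1)"
    proof (cases "t \<le> max T0 0")
      case True then show ?thesis using B1[of "H t"] t by auto
    next
      case False then have "dist (H t) L < 1" using T0 by auto
      then show ?thesis by (auto simp: dist_real_def)
    qed
  qed
qed

lemma bp:
  fixes v :: "real \<Rightarrow> real"
  assumes v: "continuous_on {0..} v" and T: "T \<ge> 0"
  shows "integral {0..T} (\<lambda>t. exp (-(c*t)) * v t) =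
     exp (-(c*T)) * integral {0..T} v + c * integral {0..T} (\<lambda>t. exp (-(c*t)) * integral {0..t} v)"
proof -
  define V where "V s = integral {0..s} v" for s
  have cV: "continuous_on {0..} V" unfolding V_def by (rule indef_integral_cont[OF v])
  have d: "((\<lambda>s. exp (-(c * s)) * V s) has_vector_derivative
      (exp (-(c*x)) * v x - c * (exp (-(c*x)) * V x))) (at x within {0..T})" if x: "x \<in> {0..T}" for x
  proof -
    have "((\<lambda>s. exp (-(c * s)) * V s) has_real_derivative
      (exp (-(c*x)) * (- c) * V x + exp (-(c*x)) * v x)) (at x within {0..})"
      unfolding V_def using x
      by (auto intro!: derivative_eq_intros indef_integral_deriv[OF v])
    then have "((\<lambda>s. exp (-(c * s)) * V s) has_real_derivative
      (exp (-(c*x)) * (- c) * V x + exp (-(c*x)) * v x)) (at x within {0..T})"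
      by (rule DERIV_subset) auto
    moreover have "exp (-(c*x)) * (- c) * V x + exp (-(c*x)) * v x = exp (-(c*x)) * v x - c * (exp (-(c*x)) * V x)"
      by (simp add: algebra_simps)
    ultimately have "((\<lambda>s. exp (-(c * s)) * V s) has_real_derivative
      (exp (-(c*x)) * v x - c * (exp (-(c*x)) * V x))) (at x within {0..T})" by metis
    then show ?thesis by (simp add: has_real_derivative_iff_has_vector_derivative)
  qed
  have "((\<lambda>x. exp (-(c*x)) * v x - c * (exp (-(c*x)) * V x)) has_integral
          (exp (-(c*T)) * V T - exp (-(c*0)) * V 0)) {0..T}"
    by (rule fundamental_theorem_of_calculus[OF T d])
  moreover have "V 0 = 0" unfolding V_def by simp
  moreover have i1: "(\<lambda>x. exp (-(c*x)) * v x) integrable_on {0..T}"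
    by (rule int_cont) (auto intro!: continuous_intros v)
  moreover have i2: "(\<lambda>x. c * (exp (-(c*x)) * V x)) integrable_on {0..T}"
    by (rule int_cont) (auto intro!: continuous_intros cV)
  ultimately have "integral {0..T} (\<lambda>x. exp (-(c*x)) * v x) - integral {0..T} (\<lambda>x. c * (exp (-(c*x)) * V x))
      = exp (-(c*T)) * V T"
    using integral_diff[OF i1 i2] by (simp add: integral_unique)
  then show ?thesis unfolding V_def by simp
qed

lemma exp_neg_integral:
  fixes T :: real assumes "T \<ge> 0"
  shows "((\<lambda>s. exp (- s)) has_integral (1 - exp (- T))) {0..T}"
proof -
  have "((\<lambda>s. exp (- s)) has_integral ((- exp (- T)) - (- exp (- 0)))) {0..T}"
  proof (rule fundamental_theorem_of_calculus[OF assms])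
    fix x assume "x \<in> {0..T}"
    have "((\<lambda>s. - exp (- s)) has_real_derivative exp (- x)) (at x within {0..T})"
      by (auto intro!: derivative_eq_intros)
    then show "((\<lambda>s. - exp (- s)) has_vector_derivative exp (- x)) (at x within {0..T})"
      by (simp add: has_real_derivative_iff_has_vector_derivative)
  qed
  then show ?thesis by simp
qed




lemma phi_cont:
  fixes H :: "real \<Rightarrow> real"
  assumes cH: "continuous_on {0..} H" and lim: "(H \<longlongrightarrow> 0) at_top"
  shows "continuous_on {0..1} (\<lambda>x. if x = 0 then 0 else H (- ln x))"
  unfolding continuous_on_eq_continuous_within
proof
  fix x :: real assume x: "x \<in> {0..1}"
  define \<phi> where "\<phi> = (\<lambda>x::real. if x = 0 then 0 else H (- ln x))"
  show "continuous (at x within {0..1}) (\<lambda>x. if x = 0 then 0 else H (- ln x))"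
    unfolding \<phi>_def[symmetric]
  proof (cases "x = 0")
    case True
    have "filterlim (\<lambda>y. - ln y) at_top (at_right (0::real))"
      by (rule filterlim_compose[OF filterlim_uminus_at_top_at_bot ln_at_0])
    then have "((\<lambda>y. H (- ln y)) \<longlongrightarrow> 0) (at_right 0)"
      by (rule filterlim_compose[OF lim])
    moreover have "\<forall>\<^sub>F y in at_right 0. H (- ln y) = \<phi> y"
      using eventually_at_right_less[of "0::real"] by eventually_elim (simp add: \<phi>_def)
    ultimately have "(\<phi> \<longlongrightarrow> 0) (at_right 0)" by (rule Lim_transform_eventually)
    moreover have "at (0::real) within {0..1} \<le> at_right 0"
    proof -
      have "{0..1::real} - {0} = {0<..1} - {0}" by auto
      then have "at (0::real) within {0..1} = at 0 within {0<..1}" by (simp add: at_within_def)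
      also have "\<dots> \<le> at_right 0" by (rule at_le) auto
      finally show ?thesis .
    qed
    ultimately have "(\<phi> \<longlongrightarrow> 0) (at 0 within {0..1})" by (rule tendsto_mono[rotated])
    then show "continuous (at x within {0..1}) \<phi>" using True by (simp add: continuous_within \<phi>_def)
  next
    case False
    have c1: "continuous_on {0<..1} (\<lambda>x. H (- ln x))"
    proof (rule continuous_on_compose2[OF cH])
      show "continuous_on {0<..1} (\<lambda>x::real. - ln x)" by (rule continuous_on_minus[OF continuous_on_ln[OF continuous_on_id]]) auto
      show "(\<lambda>x::real. - ln x) ` {0<..1} \<subseteq> {0..}" by auto
    qed
    have "continuous_on {0<..1} \<phi>"
      by (rule continuous_on_cong[THEN iffD1, OF refl _ c1]) (simp add: \<phi>_def)
    then have "continuous (at x within {0<..1}) \<phi>"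
      using x False by (simp add: continuous_on_eq_continuous_within)
    moreover have "at x within {0..1} = at x within {0<..1}"
      by (rule at_within_nhd[where S="{0<..}"]) (use x False in auto)
    ultimately show "continuous (at x within {0..1}) \<phi>" by (simp add: continuous_within)
  qed
qed

lemma W_lemma:
  fixes H :: "real \<Rightarrow> real"
  assumes cH: "continuous_on {0..} H" and lim: "(H \<longlongrightarrow> 0) at_top"
    and mom: "\<And>n::nat. n \<ge> 1 \<Longrightarrow> LT H (real n) 0"
    and t: "t \<ge> 0"
  shows "H t = 0"
proof -
  obtain B where B: "\<And>s. s \<ge> 0 \<Longrightarrow> \<bar>H s\<bar> \<le> B" using bounded_of_lim[OF cH lim] by blast
  have B0: "B \<ge> 0" using B[of 0] by simp
  define T0 where "T0 = t + 1"
  have T0: "T0 > 0" "t < T0" using t by (auto simp: T0_def)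
  define q where "q s = exp (- s) * (H s)\<^sup>2" for s
  have cq: "continuous_on {0..} q" unfolding q_def by (auto intro!: continuous_intros cH)
  have q0: "q s \<ge> 0" for s unfolding q_def by simp
  define J where "J = integral {0..T0} q"
  have J0: "J \<ge> 0" unfolding J_def by (rule integral_nonneg[OF int_cont[OF cq]]) (simp add: q0)
  have JB: "J \<le> B * e" if e: "e > 0" for e
  proof -
    obtain g where g: "real_polynomial_function g" "\<And>x. x \<in> {0..1} \<Longrightarrow> \<bar>(if x = 0 then 0 else H (- ln x)) - g x\<bar> < e"
      using Stone_Weierstrass_real_polynomial_function[OF compact_Icc phi_cont[OF cH lim] e] by blast
    obtain a n where gs: "g = (\<lambda>x. \<Sum>i\<le>n. a i * x^i)" using g(1) real_polynomial_function_iff_sum by blast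
    have approx: "\<bar>H s - g (exp (- s))\<bar> < e" if s: "s \<ge> 0" for s
      using g(2)[of "exp (- s)"] s by auto
    define Ip where "Ip T = integral {0..T} (\<lambda>s. exp (- s) * g (exp (- s)) * H s)" for T
    have Ip_eq: "Ip T = (\<Sum>i\<le>n. a i * integral {0..T} (\<lambda>s. exp (- (real (Suc i) * s)) * H s))" for T
    proof -
      have "(\<lambda>s. exp (- s) * g (exp (- s)) * H s) = (\<lambda>s. \<Sum>i\<le>n. a i * (exp (- (real (Suc i) * s)) * H s))"
      proof
        fix s
        have "exp (- s) * exp (- s) ^ i = exp (- (real (Suc i) * s))" for i
          by (simp add: exp_of_nat_mult[symmetric] exp_add[symmetric] algebra_simps)
        then show "exp (- s) * g (exp (- s)) * H s = (\<Sum>i\<le>n. a i * (exp (- (real (Suc i) * s)) * H s))"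
          unfolding gs by (simp add: sum_distrib_left sum_distrib_right algebra_simps)
      qed
      moreover have "((\<lambda>s. \<Sum>i\<le>n. a i * (exp (- (real (Suc i) * s)) * H s)) has_integral
          (\<Sum>i\<le>n. a i * integral {0..T} (\<lambda>s. exp (- (real (Suc i) * s)) * H s))) {0..T}"
        by (intro has_integral_sum finite_atMost has_integral_mult_right integrable_integral int_cont)
           (auto intro!: continuous_intros cH)
      ultimately show ?thesis unfolding Ip_def by (simp add: integral_unique)
    qed
    have Ip_lim: "(Ip \<longlongrightarrow> 0) at_top"
      unfolding Ip_eq
    proof (intro tendsto_null_sum)
      fix i assume "i \<in> {..n}"
      have "LT H (real (Suc i)) 0" by (rule mom) simp
      then show "((\<lambda>T. a i * integral {0..T} (\<lambda>s. exp (- (real (Suc i) * s)) * H s)) \<longlongrightarrow> 0) at_top"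
        unfolding LT_def by (intro tendsto_mult_right_zero)
    qed
    have key: "J \<le> Ip T + B * e" if T: "T \<ge> T0" for T
    proof -
      have iq: "q integrable_on {0..T}" by (rule int_cont[OF cq])
      have "J \<le> integral {0..T} q" unfolding J_def
        by (rule integral_subset_le) (use T iq q0 int_cont[OF cq] in auto)
      also have "integral {0..T} q = Ip T + integral {0..T} (\<lambda>s. exp (- s) * H s * (H s - g (exp (- s))))"
      proof -
        have i1: "(\<lambda>s. exp (- s) * g (exp (- s)) * H s) integrable_on {0..T}"
          by (rule int_cont) (auto simp: gs intro!: continuous_intros cH)
        have i2: "(\<lambda>s. exp (- s) * H s * (H s - g (exp (- s)))) integrable_on {0..T}"
          by (rule int_cont) (auto simp: gs intro!: continuous_intros cH)
        have "integral {0..T} q = integral {0..T} (\<lambda>s. exp (- s) * g (exp (- s)) * H s + exp (- s) * H s * (H s - g (exp (- s))))"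
          by (rule integral_cong) (simp add: q_def power2_eq_square algebra_simps)
        then show ?thesis using integral_add[OF i1 i2] unfolding Ip_def by simp
      qed
      also have "integral {0..T} (\<lambda>s. exp (- s) * H s * (H s - g (exp (- s)))) \<le> integral {0..T} (\<lambda>s. B * e * exp (- s))"
      proof (rule integral_le)
        show "(\<lambda>s. exp (- s) * H s * (H s - g (exp (- s)))) integrable_on {0..T}"
          by (rule int_cont) (auto simp: gs intro!: continuous_intros cH)
        show "(\<lambda>s. B * e * exp (- s)) integrable_on {0..T}"
          by (rule int_cont) (auto intro!: continuous_intros)
        fix s assume s: "s \<in> {0..T}"
        have "exp (- s) * H s * (H s - g (exp (- s))) \<le> exp (- s) * (\<bar>H s\<bar> * \<bar>H s - g (exp (- s))\<bar>)"
          by (metis abs_ge_self abs_mult mult_left_mono exp_ge_zero mult.assoc)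
        also have "\<dots> \<le> exp (- s) * (B * e)"
          using B[of s] approx[of s] s by (intro mult_left_mono mult_mono) auto
        finally show "exp (- s) * H s * (H s - g (exp (- s))) \<le> B * e * exp (- s)" by (simp add: algebra_simps)
      qed
      also have "integral {0..T} (\<lambda>s. B * e * exp (- s)) = B * e * (1 - exp (- T))"
        using integral_unique[OF exp_neg_integral[of T]] T T0 by simp
      also have "\<dots> \<le> B * e" using B0 e by (simp add: mult_left_le)
      finally show ?thesis by simp
    qed
    have "J \<le> 0 + B * e"
      by (rule tendsto_le[OF trivial_limit_at_top_linorder tendsto_add[OF Ip_lim tendsto_const] tendsto_const])
         (auto simp: eventually_at_top_linorder intro!: exI[of _ T0] key)
    then show ?thesis by simp
  qed
  have "J \<le> 0"
  proof (rule ccontr)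
    assume "\<not> J \<le> 0"
    then have "J > 0" by simp
    then have "J \<le> B * (J / (B + 1))" using JB[of "J / (B+1)"] B0 by simp
    also have "\<dots> < J" using \<open>J > 0\<close> B0 by (simp add: field_simps)
    finally show False by simp
  qed
  then have "J = 0" using J0 by simp
  have "q t = 0"
  proof (rule has_integral_0_cbox_imp_0[of 0 T0 q])
    show "continuous_on (cbox 0 T0) q" by (rule continuous_on_subset[OF cq]) auto
    show "\<And>x. x \<in> box 0 T0 \<Longrightarrow> 0 \<le> q x" by (simp add: q0)
    show "(q has_integral 0) (cbox 0 T0)"
      using integrable_integral[OF int_cont[OF cq, of T0]] \<open>J = 0\<close> unfolding J_def by simp
    show "box 0 T0 \<noteq> {}" using T0 by simp
    show "t \<in> cbox 0 T0" using T0 t by simp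
  qed
  then show ?thesis unfolding q_def by simp
qed


lemma halfline_not_bot:
  fixes t :: real assumes t: "t \<ge> 0"
  shows "at t within {0..} \<noteq> bot"
proof -
  have "t islimpt {0..}" unfolding islimpt_approachable
  proof (intro allI impI)
    fix e :: real assume "e > 0"
    then show "\<exists>x'\<in>{0..}. x' \<noteq> t \<and> dist x' t < e"
      using t by (intro bexI[of _ "t + e/2"]) (auto simp: dist_real_def)
  qed
  then show ?thesis using trivial_limit_within by blast
qed

lemma LT_uniq:
  fixes K :: "real \<Rightarrow> real"
  assumes cK: "continuous_on {0..} K" and hyp: "\<And>x. x > \<sigma> \<Longrightarrow> LT K x 0"
    and t: "t \<ge> 0"
  shows "K t = 0"
proof -
  define s0 where "s0 = max \<sigma> 0 + 1"
  have s0: "s0 > \<sigma>" "s0 > 0" unfolding s0_def by auto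
  define v where "v u = exp (-(s0*u)) * K u" for u
  have cv: "continuous_on {0..} v" unfolding v_def by (auto intro!: continuous_intros cK)
  define H where "H s = integral {0..s} v" for s
  have cH: "continuous_on {0..} H" unfolding H_def by (rule indef_integral_cont[OF cv])
  have lim: "(H \<longlongrightarrow> 0) at_top" using hyp[OF s0(1)] unfolding LT_def H_def v_def .
  have mom: "LT H (real n) 0" if n: "n \<ge> 1" for n :: nat
  proof -
    have e1: "integral {0..T} (\<lambda>u. exp (-(real n*u)) * v u) =
        exp (-(real n*T)) * H T + real n * integral {0..T} (\<lambda>u. exp (-(real n*u)) * H u)" if "T \<ge> 0" for T
      unfolding H_def by (rule bp[OF cv that])
    have e2: "integral {0..T} (\<lambda>u. exp (-(real n*u)) * v u) = integral {0..T} (\<lambda>u. exp (-((s0 + real n)*u)) * K u)" for T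
      by (rule integral_cong) (simp add: v_def mult_exp_exp algebra_simps)
    have l1: "((\<lambda>T. integral {0..T} (\<lambda>u. exp (-(real n*u)) * v u)) \<longlongrightarrow> 0) at_top"
      unfolding e2 using hyp[of "s0 + real n"] s0 unfolding LT_def by simp
    have l2: "((\<lambda>T. exp (-(real n*T)) * H T) \<longlongrightarrow> 0) at_top"
    proof (rule Lim_null_comparison)
      show "\<forall>\<^sub>F T in at_top. norm (exp (-(real n*T)) * H T) \<le> \<bar>H T\<bar>"
        unfolding eventually_at_top_linorder
        by (intro exI[of _ 0] allI impI) (auto simp: abs_mult intro!: mult_left_le_one_le)
      show "((\<lambda>T. \<bar>H T\<bar>) \<longlongrightarrow> 0) at_top" using tendsto_rabs_zero[OF lim] .
    qed
    have "((\<lambda>T. (1 / real n) * (integral {0..T} (\<lambda>u. exp (-(real n*u)) * v u) - exp (-(real n*T)) * H T)) \<longlongrightarrow> (1 / real n) * (0 - 0)) at_top"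
      by (intro tendsto_intros l1 l2)
    moreover have "\<forall>\<^sub>F T in at_top. (1 / real n) * (integral {0..T} (\<lambda>u. exp (-(real n*u)) * v u) - exp (-(real n*T)) * H T)
        = integral {0..T} (\<lambda>u. exp (-(real n*u)) * H u)"
      unfolding eventually_at_top_linorder using n
      by (intro exI[of _ 0] allI impI) (simp add: e1)
    ultimately show ?thesis unfolding LT_def by (simp add: tendsto_cong)
  qed
  have H0: "H s = 0" if "s \<ge> 0" for s by (rule W_lemma[OF cH lim mom that])
  have d1: "(H has_real_derivative v t) (at t within {0..})"
    unfolding H_def by (rule indef_integral_deriv[OF cv t])
  have d2: "(H has_real_derivative 0) (at t within {0..})"
    by (rule has_field_derivative_transform_within[OF DERIV_const zero_less_one, of t]) (use t H0 in auto)
  have "v t = 0" by (rule has_field_derivative_unique[OF d1 d2 halfline_not_bot[OF t]])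
  then show ?thesis unfolding v_def by simp
qed


lemma exp_decay:
  fixes d :: real assumes "d > 0"
  shows "((\<lambda>T. exp (-(d*T))) \<longlongrightarrow> 0) at_top"
proof -
  have "filterlim (\<lambda>T. d*T) at_top at_top"
    by (rule filterlim_tendsto_pos_mult_at_top[OF tendsto_const assms filterlim_ident])
  then have "filterlim (\<lambda>T. -(d*T)) at_bot at_top"
    by (rule filterlim_compose[OF filterlim_uminus_at_bot_at_top])
  then show ?thesis by (rule filterlim_compose[OF exp_at_bot])
qed

lemma LT_diff:
  assumes "LT f x A" "LT g x B" "continuous_on {0..} f" "continuous_on {0..} g"
  shows "LT (\<lambda>t. f t - g t) x (A - B)"
proof -
  have "integral {0..T} (\<lambda>t. exp (-(x*t)) * (f t - g t)) =
        integral {0..T} (\<lambda>t. exp (-(x*t)) * f t) - integral {0..T} (\<lambda>t. exp (-(x*t)) * g t)" for T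
    by (subst integral_diff[symmetric]) (auto intro!: int_cont continuous_intros assms(3,4) simp: algebra_simps)
  then show ?thesis using assms(1,2) unfolding LT_def by (simp add: tendsto_diff)
qed

lemma LT_cmul:
  assumes "LT f x A" "continuous_on {0..} f"
  shows "LT (\<lambda>t. c * f t) x (c * A)"
proof -
  have "integral {0..T} (\<lambda>t. exp (-(x*t)) * (c * f t)) = c * integral {0..T} (\<lambda>t. exp (-(x*t)) * f t)" for T
    by (subst integral_mult_right[symmetric]) (simp add: algebra_simps)
  then show ?thesis using assms(1) unfolding LT_def by (simp add: tendsto_mult_left)
qed

lemma LT_const:
  assumes x: "x > 0"
  shows "LT (\<lambda>t. k) x (k / x)"
proof -
  have hi: "((\<lambda>s. exp (-(x * s)) * k) has_integral (k * (1 - exp (-(x*T))) / x)) {0..T}" if T: "T \<ge> 0" for T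
  proof -
    have "((\<lambda>s. exp (-(x * s)) * k) has_integral ((- k * exp (-(x*T)) / x) - (- k * exp (-(x*0)) / x))) {0..T}"
    proof (rule fundamental_theorem_of_calculus[OF T])
      fix y assume "y \<in> {0..T}"
      have "((\<lambda>s. - k * exp (-(x * s)) / x) has_real_derivative (- k * (exp (-(x*y)) * (- x)) / x)) (at y within {0..T})"
        by (auto intro!: derivative_eq_intros)
      moreover have "- k * (exp (-(x*y)) * (- x)) / x = exp (-(x*y)) * k" using x by simp
      ultimately show "((\<lambda>s. - k * exp (-(x * s)) / x) has_vector_derivative exp (-(x*y)) * k) (at y within {0..T})"
        by (simp add: has_real_derivative_iff_has_vector_derivative)
    qed
    then show ?thesis by (simp add: algebra_simps diff_divide_distrib)
  qed
  have "((\<lambda>T. k * (1 - exp (-(x*T))) / x) \<longlongrightarrow> k * (1 - 0) / x) at_top"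
    by (intro tendsto_intros exp_decay x) (use x in simp)
  moreover have "\<forall>\<^sub>F T in at_top. k * (1 - exp (-(x*T))) / x = integral {0..T} (\<lambda>s. exp (-(x * s)) * k)"
    unfolding eventually_at_top_linorder
    by (intro exI[of _ 0] allI impI, rule sym, rule integral_unique, rule hi, assumption)
  ultimately show ?thesis unfolding LT_def by (simp add: tendsto_cong)
qed

lemma growth:
  fixes g :: "real \<Rightarrow> real"
  assumes cg: "continuous_on {0..} g" and lt: "LT g x1 L" and x1: "x1 > 0" and x: "x > x1"
  shows "((\<lambda>T. exp (-(x*T)) * integral {0..T} g) \<longlongrightarrow> 0) at_top"
proof -
  define v where "v u = exp (-(x1*u)) * g u" for u
  have cv: "continuous_on {0..} v" unfolding v_def by (auto intro!: continuous_intros cg)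
  define H where "H s = integral {0..s} v" for s
  have cH: "continuous_on {0..} H" unfolding H_def by (rule indef_integral_cont[OF cv])
  have lim: "(H \<longlongrightarrow> L) at_top" using lt unfolding LT_def H_def v_def .
  obtain B where B: "\<And>s. s \<ge> 0 \<Longrightarrow> \<bar>H s\<bar> \<le> B" using bounded_of_lim[OF cH lim] by blast
  have B0: "B \<ge> 0" using B[of 0] by simp
  have bound: "\<bar>integral {0..T} g\<bar> \<le> 2 * B * exp (x1 * T)" if T: "T \<ge> 0" for T
  proof -
    have e1: "integral {0..T} (\<lambda>u. exp (-((-x1)*u)) * v u) =
        exp (-((-x1)*T)) * H T + (-x1) * integral {0..T} (\<lambda>u. exp (-((-x1)*u)) * H u)"
      unfolding H_def by (rule bp[OF cv T])
    have e2: "integral {0..T} (\<lambda>u. exp (-((-x1)*u)) * v u) = integral {0..T} g"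
      by (rule integral_cong) (simp add: v_def mult_exp_exp[symmetric] mult.assoc[symmetric] exp_add[symmetric])
    have hi: "((\<lambda>u. x1 * exp (x1*u)) has_integral (exp (x1*T) - exp (x1*0))) {0..T}"
    proof (rule fundamental_theorem_of_calculus[OF T])
      fix y assume "y \<in> {0..T}"
      have "((\<lambda>u. exp (x1*u)) has_real_derivative (exp (x1*y) * x1)) (at y within {0..T})"
        by (auto intro!: derivative_eq_intros)
      then show "((\<lambda>u. exp (x1*u)) has_vector_derivative x1 * exp (x1*y)) (at y within {0..T})"
        by (simp add: has_real_derivative_iff_has_vector_derivative mult.commute)
    qed
    have "\<bar>x1 * integral {0..T} (\<lambda>u. exp (x1*u) * H u)\<bar> = norm (integral {0..T} (\<lambda>u. x1 * (exp (x1*u) * H u)))"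
      by simp
    also have "\<dots> \<le> integral {0..T} (\<lambda>u. B * (x1 * exp (x1*u)))"
    proof (rule integral_norm_bound_integral)
      show "(\<lambda>u. x1 * (exp (x1 * u) * H u)) integrable_on {0..T}"
        by (rule int_cont) (auto intro!: continuous_intros cH)
      show "(\<lambda>u. B * (x1 * exp (x1 * u))) integrable_on {0..T}"
        by (rule int_cont) (auto intro!: continuous_intros)
      fix u assume u: "u \<in> {0..T}"
      show "norm (x1 * (exp (x1 * u) * H u)) \<le> B * (x1 * exp (x1 * u))"
        using B[of u] u x1 by (simp add: abs_mult mult_left_mono mult.commute mult.left_commute)
    qed
    also have "\<dots> = B * (exp (x1*T) - 1)"
      using integral_unique[OF hi] by simp
    finally have b1: "\<bar>x1 * integral {0..T} (\<lambda>u. exp (x1*u) * H u)\<bar> \<le> B * (exp (x1*T) - 1)" .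
    have b2: "\<bar>exp (x1*T) * H T\<bar> \<le> B * exp (x1*T)"
      using B[of T] T by (simp add: abs_mult mult.commute mult_left_mono)
    have "integral {0..T} g = exp (x1*T) * H T - x1 * integral {0..T} (\<lambda>u. exp (x1*u) * H u)"
      using e1 e2 by simp
    then have "\<bar>integral {0..T} g\<bar> \<le> B * exp (x1*T) + B * (exp (x1*T) - 1)"
      using b1 b2 by linarith
    also have "\<dots> \<le> 2 * B * exp (x1 * T)" using B0 by (simp add: algebra_simps)
    finally show ?thesis .
  qed
  show ?thesis
  proof (rule Lim_null_comparison)
    show "\<forall>\<^sub>F T in at_top. norm (exp (-(x*T)) * integral {0..T} g) \<le> 2 * B * exp (-((x - x1)*T))"
      unfolding eventually_at_top_linorder
    proof (intro exI[of _ 0] allI impI)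
      fix T :: real assume T: "T \<ge> 0"
      have "norm (exp (-(x*T)) * integral {0..T} g) = exp (-(x*T)) * \<bar>integral {0..T} g\<bar>"
        by (simp add: abs_mult)
      also have "\<dots> \<le> exp (-(x*T)) * (2 * B * exp (x1 * T))"
        by (rule mult_left_mono[OF bound[OF T]]) simp
      also have "\<dots> = 2 * B * exp (-((x - x1)*T))"
        by (simp add: mult_exp_exp[symmetric] algebra_simps exp_add[symmetric] exp_diff)
      finally show "norm (exp (-(x*T)) * integral {0..T} g) \<le> 2 * B * exp (-((x - x1)*T))" .
    qed
    show "((\<lambda>T. 2 * B * exp (-((x - x1)*T))) \<longlongrightarrow> 0) at_top"
      using tendsto_mult_right_zero[OF exp_decay[of "x - x1"], of "2*B"] x by simp
  qed
qed


lemma ode_LT: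
  fixes f r :: "real \<Rightarrow> real"
  assumes cf: "continuous_on {0..} f" and cr: "continuous_on {0..} r"
    and hyp: "\<And>x. x > \<sigma> \<Longrightarrow> LT f x (F x) \<and> LT r x (R x) \<and> (x + a) * F x = R x + \<kappa>"
    and t: "t \<ge> 0"
  shows "f t = \<kappa> + integral {0..t} (\<lambda>s. r s - a * f s)"
proof -
  define g where "g s = r s - a * f s" for s
  have cg: "continuous_on {0..} g" unfolding g_def by (auto intro!: continuous_intros cf cr)
  define V where "V s = integral {0..s} g" for s
  have cV: "continuous_on {0..} V" unfolding V_def by (rule indef_integral_cont[OF cg])
  define K where "K s = f s - \<kappa> - V s" for s
  have cK: "continuous_on {0..} K" unfolding K_def by (auto intro!: continuous_intros cf cV)
  define \<sigma>' where "\<sigma>' = max \<sigma> 0"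
  have "K t = 0"
  proof (rule LT_uniq[OF cK _ t])
    fix x assume x: "x > \<sigma>'"
    then have x0: "x > 0" and xs: "x > \<sigma>" unfolding \<sigma>'_def by auto
    have Lg: "LT g y (R y - a * F y)" if "y > \<sigma>" for y
      unfolding g_def using hyp[OF that] by (intro LT_diff LT_cmul cf cr continuous_intros) auto
    define x1 where "x1 = (x + \<sigma>') / 2"
    have x1: "x1 > 0" "x1 > \<sigma>" "x > x1" using x unfolding x1_def \<sigma>'_def by auto
    have gr: "((\<lambda>T. exp (-(x*T)) * V T) \<longlongrightarrow> 0) at_top"
      unfolding V_def by (rule growth[OF cg Lg[OF x1(2)] x1(1) x1(3)])
    have e1: "integral {0..T} (\<lambda>u. exp (-(x*u)) * g u) =
        exp (-(x*T)) * V T + x * integral {0..T} (\<lambda>u. exp (-(x*u)) * V u)" if "T \<ge> 0" for T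
      unfolding V_def by (rule bp[OF cg that])
    have LV: "LT V x ((R x - a * F x) / x)"
    proof -
      have "((\<lambda>T. (integral {0..T} (\<lambda>u. exp (-(x*u)) * g u) - exp (-(x*T)) * V T) / x)
          \<longlongrightarrow> ((R x - a * F x) - 0) / x) at_top"
        using Lg[OF xs] gr unfolding LT_def by (intro tendsto_intros) (use x0 in auto)
      moreover have "\<forall>\<^sub>F T in at_top. (integral {0..T} (\<lambda>u. exp (-(x*u)) * g u) - exp (-(x*T)) * V T) / x
          = integral {0..T} (\<lambda>u. exp (-(x*u)) * V u)"
        unfolding eventually_at_top_linorder using x0
        by (intro exI[of _ 0] allI impI) (simp add: e1)
      ultimately show ?thesis unfolding LT_def by (simp add: tendsto_cong)
    qed
    have "LT (\<lambda>s. f s - \<kappa> - V s) x (F x - \<kappa> / x - (R x - a * F x) / x)"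
      using hyp[OF xs] LT_const[OF x0, of \<kappa>] LV
      by (intro LT_diff cf cV continuous_intros) auto
    moreover have "F x - \<kappa> / x - (R x - a * F x) / x = 0"
    proof -
      have "F x - \<kappa> / x - (R x - a * F x) / x = ((x + a) * F x - R x - \<kappa>) / x"
        using x0 by (simp add: field_simps)
      also have "\<dots> = 0" using hyp[OF xs] by simp
      finally show ?thesis .
    qed
    ultimately show "LT K x 0" unfolding K_def by simp
  qed
  then show ?thesis unfolding K_def V_def g_def by simp
qed

lemma ode_LT_deriv:
  fixes f r :: "real \<Rightarrow> real"
  assumes cf: "continuous_on {0..} f" and cr: "continuous_on {0..} r"
    and eq: "\<And>t. t \<ge> 0 \<Longrightarrow> f t = \<kappa> + integral {0..t} (\<lambda>s. r s - a * f s)"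
    and t: "t \<ge> 0"
  shows "(f has_real_derivative (r t - a * f t)) (at t within {0..})"
proof -
  have cg: "continuous_on {0..} (\<lambda>s. r s - a * f s)" by (auto intro!: continuous_intros cf cr)
  have "((\<lambda>t. \<kappa> + integral {0..t} (\<lambda>s. r s - a * f s)) has_real_derivative (0 + (r t - a * f t))) (at t within {0..})"
    by (intro DERIV_add DERIV_const indef_integral_deriv[OF cg t])
  then have "((\<lambda>t. \<kappa> + integral {0..t} (\<lambda>s. r s - a * f s)) has_real_derivative (r t - a * f t)) (at t within {0..})"
    by simp
  then show ?thesis
    by (rule has_field_derivative_transform_within[OF _ zero_less_one]) (use t eq in auto)
qed


lemma decay:
  fixes f r :: "real \<Rightarrow> real"
  assumes cr: "continuous_on {0..} r"
    and d: "\<And>t. t \<ge> 0 \<Longrightarrow> (f has_real_derivative (r t - a * f t)) (at t within {0..})"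
    and a: "a > 2" and rb: "\<And>t. t \<ge> 0 \<Longrightarrow> \<bar>r t\<bar> \<le> C * exp (-(2*t))"
  shows "\<exists>C'. \<forall>t\<ge>0. \<bar>f t\<bar> \<le> C' * exp (-(2*t))"
proof -
  have C0: "C \<ge> 0" using rb[of 0] by simp
  have bnd: "\<bar>f t\<bar> \<le> (\<bar>f 0\<bar> + C / (a - 2)) * exp (-(2*t))" if t: "t \<ge> 0" for t
  proof -
    have hu: "((\<lambda>s. exp (a * s) * r s) has_integral (exp (a * t) * f t - exp (a * 0) * f 0)) {0..t}"
    proof (rule fundamental_theorem_of_calculus[OF t])
      fix y assume y: "y \<in> {0..t}"
      have "((\<lambda>s. exp (a * s) * f s) has_real_derivative (exp (a * y) * a * f y + exp (a * y) * (r y - a * f y))) (at y within {0..})"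
        using y by (auto intro!: derivative_eq_intros d)
      then have "((\<lambda>s. exp (a * s) * f s) has_real_derivative (exp (a * y) * a * f y + exp (a * y) * (r y - a * f y))) (at y within {0..t})"
        by (rule DERIV_subset) auto
      moreover have "exp (a * y) * a * f y + exp (a * y) * (r y - a * f y) = exp (a * y) * r y"
        by (simp add: algebra_simps)
      ultimately show "((\<lambda>s. exp (a * s) * f s) has_vector_derivative exp (a * y) * r y) (at y within {0..t})"
        by (simp add: has_real_derivative_iff_has_vector_derivative)
    qed
    have hc: "((\<lambda>s. C * exp ((a - 2) * s)) has_integral (C * exp ((a - 2) * t) / (a - 2) - C * exp ((a - 2) * 0) / (a - 2))) {0..t}"
    proof (rule fundamental_theorem_of_calculus[OF t])
      fix y assume y: "y \<in> {0..t}"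
      have "((\<lambda>s. C * exp ((a - 2) * s) / (a - 2)) has_real_derivative (C * (exp ((a - 2) * y) * (a - 2)) / (a - 2))) (at y within {0..t})"
        by (auto intro!: derivative_eq_intros)
      moreover have "C * (exp ((a - 2) * y) * (a - 2)) / (a - 2) = C * exp ((a - 2) * y)" using a by simp
      ultimately show "((\<lambda>s. C * exp ((a - 2) * s) / (a - 2)) has_vector_derivative C * exp ((a - 2) * y)) (at y within {0..t})"
        by (simp add: has_real_derivative_iff_has_vector_derivative)
    qed
    have "norm (integral {0..t} (\<lambda>s. exp (a * s) * r s)) \<le> integral {0..t} (\<lambda>s. C * exp ((a - 2) * s))"
    proof (rule integral_norm_bound_integral)
      show "(\<lambda>s. exp (a * s) * r s) integrable_on {0..t}" using hu by blast
      show "(\<lambda>s. C * exp ((a - 2) * s)) integrable_on {0..t}" using hc by blast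
      fix s assume s: "s \<in> {0..t}"
      have "norm (exp (a * s) * r s) = exp (a * s) * \<bar>r s\<bar>" by (simp add: abs_mult)
      also have "\<dots> \<le> exp (a * s) * (C * exp (-(2 * s)))" using rb[of s] s by (intro mult_left_mono) auto
      also have "\<dots> = C * exp ((a - 2) * s)" by (simp add: mult_exp_exp[symmetric] algebra_simps exp_add[symmetric])
      finally show "norm (exp (a * s) * r s) \<le> C * exp ((a - 2) * s)" .
    qed
    then have "\<bar>exp (a * t) * f t - f 0\<bar> \<le> C * exp ((a - 2) * t) / (a - 2) - C / (a - 2)"
      using integral_unique[OF hu] integral_unique[OF hc] by simp
    also have "\<dots> \<le> C * exp ((a - 2) * t) / (a - 2)" using C0 a by simp
    finally have "\<bar>exp (a * t) * f t\<bar> \<le> \<bar>f 0\<bar> + C * exp ((a - 2) * t) / (a - 2)" by linarith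
    then have "exp (-(a*t)) * \<bar>exp (a * t) * f t\<bar> \<le> exp (-(a*t)) * (\<bar>f 0\<bar> + C * exp ((a - 2) * t) / (a - 2))"
      by (rule mult_left_mono) simp
    also have "exp (-(a*t)) * \<bar>exp (a * t) * f t\<bar> = \<bar>f t\<bar>"
      by (simp add: abs_mult mult.assoc[symmetric] exp_add[symmetric])
    also have "exp (-(a*t)) * (\<bar>f 0\<bar> + C * exp ((a - 2) * t) / (a - 2)) =
        \<bar>f 0\<bar> * exp (-(a*t)) + C / (a - 2) * exp (-(2*t))"
      by (simp add: algebra_simps exp_add[symmetric] add_divide_distrib)
    also have "\<dots> \<le> \<bar>f 0\<bar> * exp (-(2*t)) + C / (a - 2) * exp (-(2*t))"
      using a t C0 by (intro add_mono mult_left_mono) (auto intro!: mult_right_mono)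
    finally show ?thesis by (simp add: algebra_simps)
  qed
  then show ?thesis by blast
qed





lemma cd_rec:
  fixes x :: real assumes x: "x > 0"
  shows "cfun (Suc j) (of_real x) * of_real (x + real (8*Suc j) + 10) =
           of_nat (8*j) * cfun j (of_real x) + 10 * dfun j (of_real x)"
    and "dfun (Suc j) (of_real x) * of_real (x + real (8*Suc j) + 13) =
           13 * cfun (Suc j) (of_real x) + of_nat (8*j) * dfun j (of_real x)"
proof -
  define \<xi> where "\<xi> = complex_of_real x"
  define c where "c = cfun j \<xi>"
  define d where "d = dfun j \<xi>"
  define a where "a = of_nat (8 * Suc j) + 10 + \<xi>"
  define b where "b = of_nat (8 * Suc j) + 13 + \<xi>"
  have a: "a = of_real (x + real (8*Suc j) + 10)" unfolding a_def \<xi>_def by simp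
  have b: "b = of_real (x + real (8*Suc j) + 13)" unfolding b_def \<xi>_def by simp
  have a0: "a \<noteq> 0" unfolding a of_real_eq_0_iff using x by linarith
  have b0: "b \<noteq> 0" unfolding b of_real_eq_0_iff using x by linarith
  define X where "X = of_nat (8 * j) * c + 10 * d"
  define Y where "Y = of_nat (8 * j) * d"
  have cs: "cfun (Suc j) \<xi> = b * X / (a * b)"
    unfolding cfun_def X_def c_def d_def a_def b_def dfun_def by (simp only: cdvec.simps Let_def fst_conv)
  have ds: "dfun (Suc j) \<xi> = (13 * X + a * Y) / (a * b)"
    unfolding cfun_def X_def Y_def c_def d_def a_def b_def dfun_def by (simp only: cdvec.simps Let_def snd_conv)
  have c1: "cfun (Suc j) \<xi> * a = X" unfolding cs using a0 b0 by simp
  have c2: "cfun (Suc j) \<xi> = X / a" using c1 a0 by (simp add: field_simps)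
  have d1: "dfun (Suc j) \<xi> * b = 13 * cfun (Suc j) \<xi> + Y" unfolding ds c2 using a0 b0
    by (simp add: divide_simps)
  show "cfun (Suc j) (of_real x) * of_real (x + real (8*Suc j) + 10) =
           of_nat (8*j) * cfun j (of_real x) + 10 * dfun j (of_real x)"
    using c1 unfolding a X_def c_def d_def \<xi>_def .
  show "dfun (Suc j) (of_real x) * of_real (x + real (8*Suc j) + 13) =
           13 * cfun (Suc j) (of_real x) + of_nat (8*j) * dfun j (of_real x)"
    using d1 unfolding b Y_def d_def \<xi>_def .
qed

lemma aux_f1: fixes u v w :: "'a::field" shows "u \<noteq> 0 \<Longrightarrow> (1/u) * (v * u) / w = v / w" by simp
lemma aux_f2: fixes v w :: "'a::field" shows "w \<noteq> 0 \<Longrightarrow> v / w - 1 = (v - w) / w" by (simp add: diff_divide_distrib)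

lemma d0_ne:
  fixes x :: real assumes x: "x > 0"
  shows "dfun 0 (of_real x) \<noteq> 0"
    and "cfun 0 (of_real x) / dfun 0 (of_real x) - 1 = - 10 / of_real (x + 23)"
proof -
  define \<xi> where "\<xi> = complex_of_real x"
  have h: "\<xi> + 23 \<noteq> 0" "\<xi> + 13 \<noteq> 0" "\<xi> + 10 \<noteq> 0"
  proof -
    have "\<xi> + 23 = of_real (x + 23)" "\<xi> + 13 = of_real (x + 13)"
      "\<xi> + 10 = of_real (x + 10)" unfolding \<xi>_def by simp_all
    moreover have "x + 23 \<noteq> 0" "x + 13 \<noteq> 0" "x + 10 \<noteq> 0" using x by simp_all
    ultimately show "\<xi> + 23 \<noteq> 0" "\<xi> + 13 \<noteq> 0" "\<xi> + 10 \<noteq> 0"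
      by (metis of_real_eq_0_iff)+
  qed
  have e: "of_real (x + 23) = \<xi> + 23" unfolding \<xi>_def by simp
  have dd: "dfun 0 \<xi> = (\<xi> + 23) / ((\<xi> + 13) * (\<xi> + 10))" by (simp add: dfun_def)
  have cc: "cfun 0 \<xi> = 1 / (\<xi> + 10)" by (simp add: cfun_def)
  show "dfun 0 (of_real x) \<noteq> 0" unfolding \<xi>_def[symmetric] dd using h by simp
  have "cfun 0 \<xi> / dfun 0 \<xi> = (1/(\<xi>+10)) * ((\<xi>+13)*(\<xi>+10)) / (\<xi>+23)"
    unfolding dd cc by (rule divide_divide_eq_right)
  also have "\<dots> = (\<xi> + 13) / (\<xi> + 23)" by (rule aux_f1[OF h(3)])
  also have "\<dots> - 1 = ((\<xi> + 13) - (\<xi> + 23)) / (\<xi> + 23)" by (rule aux_f2[OF h(1)])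
  also have "(\<xi> + 13) - (\<xi> + 23) = - 10" by simp
  finally show "cfun 0 (of_real x) / dfun 0 (of_real x) - 1 = - 10 / of_real (x + 23)"
    unfolding e \<xi>_def[symmetric] .
qed


lemma Re_of_real_mult': "Re (z * complex_of_real r) = Re z * r" by simp
lemma Re_nat_mult': "Re (of_nat n * z) = real n * Re z" by simp
lemma Re_num_mult': "Re (numeral k * z) = numeral k * Re z" by simp

lemma rel_c:
  fixes x :: real assumes x: "x > 0"
  shows "Re (cfun (Suc i) (of_real x) / dfun 0 (of_real x)) * (x + real (8*Suc i) + 10) =
    real (8*i) * Re (cfun i (of_real x) / dfun 0 (of_real x)) + 10 * Re (dfun i (of_real x) / dfun 0 (of_real x))"
proof -
  define d0 where "d0 = dfun 0 (of_real x)"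
  have "cfun (Suc i) (of_real x) / d0 * of_real (x + real (8*Suc i) + 10) =
     (of_nat (8*i) * cfun i (of_real x) + 10 * dfun i (of_real x)) / d0"
    using cd_rec(1)[OF x, of i] by (metis times_divide_eq_left)
  also have "\<dots> = of_nat (8*i) * (cfun i (of_real x) / d0) + 10 * (dfun i (of_real x) / d0)"
    by (simp add: add_divide_distrib)
  finally have "Re (cfun (Suc i) (of_real x) / d0 * of_real (x + real (8*Suc i) + 10)) =
     Re (of_nat (8*i) * (cfun i (of_real x) / d0) + 10 * (dfun i (of_real x) / d0))" by simp
  then show ?thesis unfolding d0_def[symmetric] Re_of_real_mult' plus_complex.sel Re_nat_mult' Re_num_mult' by linarith
qed

lemma rel_d:
  fixes x :: real assumes x: "x > 0"
  shows "Re (dfun (Suc i) (of_real x) / dfun 0 (of_real x)) * (x + real (8*Suc i) + 13) =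
    13 * Re (cfun (Suc i) (of_real x) / dfun 0 (of_real x)) + real (8*i) * Re (dfun i (of_real x) / dfun 0 (of_real x))"
proof -
  define d0 where "d0 = dfun 0 (of_real x)"
  have "dfun (Suc i) (of_real x) / d0 * of_real (x + real (8*Suc i) + 13) =
     (13 * cfun (Suc i) (of_real x) + of_nat (8*i) * dfun i (of_real x)) / d0"
    using cd_rec(2)[OF x, of i] by (metis times_divide_eq_left)
  also have "\<dots> = 13 * (cfun (Suc i) (of_real x) / d0) + of_nat (8*i) * (dfun i (of_real x) / d0)"
    by (simp add: add_divide_distrib)
  finally have "Re (dfun (Suc i) (of_real x) / d0 * of_real (x + real (8*Suc i) + 13)) =
     Re (13 * (cfun (Suc i) (of_real x) / d0) + of_nat (8*i) * (dfun i (of_real x) / d0))" by simp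
  then show ?thesis unfolding d0_def[symmetric] Re_of_real_mult' plus_complex.sel Re_nat_mult' Re_num_mult' by linarith
qed

lemma rel_0:
  fixes x :: real assumes x: "x > 0"
  shows "Re (cfun 0 (of_real x) / dfun 0 (of_real x) - 1) * (x + 23) = - 10"
    and "Re (dfun 0 (of_real x) / dfun 0 (of_real x)) = 1"
proof -
  have "Re (cfun 0 (of_real x) / dfun 0 (of_real x) - 1) = - 10 / (x + 23)"
    unfolding d0_ne(2)[OF x] by (simp del: of_real_add add: Re_divide_of_real[where r="x+23"])
  then show "Re (cfun 0 (of_real x) / dfun 0 (of_real x) - 1) * (x + 23) = - 10" using x by (simp add: field_simps)
  show "Re (dfun 0 (of_real x) / dfun 0 (of_real x)) = 1" using d0_ne(1)[OF x] by simp
qed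


lemma inv_lap_LT:
  assumes "is_inverse_laplace f R"
  shows "continuous_on {0..} f" "\<exists>\<sigma>. \<forall>x>\<sigma>. LT f x (Re (R (of_real x)))"
proof -
  from assms show "continuous_on {0..} f" unfolding is_inverse_laplace_def by blast
  from assms obtain \<sigma> :: real where h: "\<And>\<xi>::complex. \<sigma> < Re \<xi> \<Longrightarrow>
        ((\<lambda>t. exp (- (\<xi> * of_real t)) * of_real (f t)) has_integral R \<xi>) {0..}"
    unfolding is_inverse_laplace_def by blast
  have "LT f x (Re (R (of_real x)))" if x: "x > \<sigma>" for x
  proof -
    have "((\<lambda>t. exp (- (complex_of_real x * of_real t)) * of_real (f t)) has_integral R (of_real x)) {0..}"
      using h[of "of_real x"] x by simp
    from has_integral_linear[OF this bounded_linear_Re]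
    have "((\<lambda>t. exp (-(x*t)) * f t) has_integral Re (R (of_real x))) {0..}"
    proof (rule has_integral_eq[rotated])
      fix t :: real
      have "exp (- (complex_of_real x * of_real t)) = of_real (exp (-(x*t)))"
        by (simp add: exp_of_real[symmetric])
      then show "(Re \<circ> (\<lambda>t. exp (- (complex_of_real x * of_real t)) * of_real (f t))) t = exp (-(x*t)) * f t"
        by simp
    qed
    then show ?thesis unfolding LT_def by (rule has_integral_halfline_lim)
  qed
  then show "\<exists>\<sigma>. \<forall>x>\<sigma>. LT f x (Re (R (of_real x)))" by blast
qed




lemma tele:
  fixes X Y :: "nat \<Rightarrow> real"
  assumes "\<And>j. 1 \<le> j \<Longrightarrow> j \<le> M \<Longrightarrow> X j = Y (j - 1)"
  shows "(\<Sum>j\<le>M. X j / q^j - Y j / q^(Suc j)) = X 0 - Y M / q^(Suc M)"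
  using assms
proof (induction M)
  case 0 then show ?case by simp
next
  case (Suc M)
  have "X (Suc M) = Y M" using Suc.prems[of "Suc M"] by simp
  then show ?case using Suc by simp
qed

lemma summand:
  fixes q \<gamma> P fj f'j gj hj k j :: real
  assumes q: "q = 1 + \<gamma>\<^sup>2" and P: "P \<noteq> 0"
  shows "f'j / P - 4 * \<gamma> * (- 2 * j * \<gamma> * fj / (q * P)) + k * (fj / P) + gj / P + hj / (q * P)
     = (f'j + (8 * j + k) * fj + gj) / P - (8 * j * fj - hj) / (q * P)"
proof -
  have q0: "q \<noteq> 0" using q by (metis add_pos_nonneg zero_less_one zero_le_power2 less_irrefl)
  have "\<gamma>\<^sup>2 = q - 1" using q by simp
  then have g2: "\<gamma> * \<gamma> = q - 1" by (simp add: power2_eq_square)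
  have q0': "1 + \<gamma>\<^sup>2 \<noteq> 0" using q0 q by simp
  show ?thesis using q0 P
    by (simp add: field_simps) (use g2 in algebra)
qed

lemma gen_pde:
  fixes f f' g h :: "nat \<Rightarrow> real" and \<gamma> k :: real
  assumes q: "q = 1 + \<gamma>\<^sup>2"
    and rec: "\<And>j. 1 \<le> j \<Longrightarrow> j \<le> M \<Longrightarrow> f' j + (8 * real j + k) * f j + g j = 8 * real (j - 1) * f (j - 1) - h (j - 1)"
  shows "(\<Sum>j\<le>M. f' j / q^j) - 4 * \<gamma> * (\<Sum>j\<le>M. - 2 * real j * \<gamma> * f j / q^(j+1)) + k * (\<Sum>j\<le>M. f j / q^j)
     + (\<Sum>j\<le>M. g j / q^j) + (\<Sum>j\<le>M. h j / q^(j+1))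
     = (f' 0 + k * f 0 + g 0) - (8 * real M * f M - h M) / q^(M+1)"
proof -
  have q0: "q > 0" using q by (simp add: add_pos_nonneg)
  have "(\<Sum>j\<le>M. f' j / q^j) - 4 * \<gamma> * (\<Sum>j\<le>M. - 2 * real j * \<gamma> * f j / q^(j+1)) + k * (\<Sum>j\<le>M. f j / q^j)
     + (\<Sum>j\<le>M. g j / q^j) + (\<Sum>j\<le>M. h j / q^(j+1))
     = (\<Sum>j\<le>M. f' j / q^j - 4 * \<gamma> * (- 2 * real j * \<gamma> * f j / (q * q^j)) + k * (f j / q^j) + g j / q^j + h j / (q * q^j))"
    by (simp add: sum.distrib sum_subtractf sum_distrib_left sum_negf)
  also have "\<dots> = (\<Sum>j\<le>M. (f' j + (8 * real j + k) * f j + g j) / q^j - (8 * real j * f j - h j) / (q * q^j))"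
    by (rule sum.cong[OF refl], rule summand[OF q]) (use q0 in simp)
  also have "\<dots> = (\<Sum>j\<le>M. (f' j + (8 * real j + k) * f j + g j) / q^j - (8 * real j * f j - h j) / q^(Suc j))"
    by simp
  also have "\<dots> = (f' 0 + (8 * real 0 + k) * f 0 + g 0) - (8 * real M * f M - h M) / q^(Suc M)"
    by (rule tele) (use rec in simp)
  finally show ?thesis by simp
qed


lemma LT_add:
  assumes "LT f x A" "LT g x B" "continuous_on {0..} f" "continuous_on {0..} g"
  shows "LT (\<lambda>t. f t + g t) x (A + B)"
proof -
  have "integral {0..T} (\<lambda>t. exp (-(x*t)) * (f t + g t)) =
        integral {0..T} (\<lambda>t. exp (-(x*t)) * f t) + integral {0..T} (\<lambda>t. exp (-(x*t)) * g t)" for T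
    by (subst integral_add[symmetric]) (auto intro!: int_cont continuous_intros assms(3,4) simp: algebra_simps)
  then show ?thesis using assms(1,2) unfolding LT_def by (simp add: tendsto_add)
qed

lemma ode_const:
  fixes f :: "real \<Rightarrow> real"
  assumes d: "\<And>t. t \<ge> 0 \<Longrightarrow> (f has_real_derivative (0 - a * f t)) (at t within {0..})"
    and t: "t \<ge> 0"
  shows "f t = f 0 * exp (-(a*t))"
proof -
  have "((\<lambda>s. 0::real) has_integral (exp (a * t) * f t - exp (a * 0) * f 0)) {0..t}"
  proof (rule fundamental_theorem_of_calculus[OF t])
    fix y assume y: "y \<in> {0..t}"
    have "((\<lambda>s. exp (a * s) * f s) has_real_derivative (exp (a * y) * a * f y + exp (a * y) * (0 - a * f y))) (at y within {0..})"
      using y by (auto intro!: derivative_eq_intros d)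
    then have "((\<lambda>s. exp (a * s) * f s) has_real_derivative (exp (a * y) * a * f y + exp (a * y) * (0 - a * f y))) (at y within {0..t})"
      by (rule DERIV_subset) auto
    moreover have "exp (a * y) * a * f y + exp (a * y) * (0 - a * f y) = 0" by (simp add: algebra_simps)
    ultimately show "((\<lambda>s. exp (a * s) * f s) has_vector_derivative 0) (at y within {0..t})"
      by (simp add: has_real_derivative_iff_has_vector_derivative)
  qed
  from has_integral_unique[OF has_integral_0 this] have "exp (a * t) * f t = f 0" by simp
  have e1: "exp (-(a*t)) * exp (a*t) = 1" by (simp add: exp_add[symmetric])
  have "f t = (exp (-(a*t)) * exp (a*t)) * f t" unfolding e1 by simp
  also have "\<dots> = exp (-(a*t)) * (exp (a * t) * f t)" by (rule mult.assoc)
  also have "\<dots> = exp (-(a*t)) * f 0" unfolding \<open>exp (a * t) * f t = f 0\<close> ..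
  finally show ?thesis by (simp add: mult.commute)
qed

lemma aux_pow:
  fixes Q c n g :: real assumes Q: "Q \<noteq> 0"
  shows "- (c * (n * Q ^ i * (2 * g)) / (Q ^ Suc i * Q ^ Suc i)) = - 2 * n * g * c / Q ^ (Suc i + 1)"
proof -
  have e: "Q ^ Suc i * Q ^ Suc i = Q ^ i * Q ^ (Suc i + 1)" by (simp add: power_add[symmetric])
  have "- (c * (n * Q ^ i * (2 * g)) / (Q ^ Suc i * Q ^ Suc i)) = - (Q ^ i * (2 * n * g * c)) / (Q ^ i * Q ^ (Suc i + 1))"
    unfolding e by (simp add: algebra_simps)
  also have "\<dots> = - (2 * n * g * c) / Q ^ (Suc i + 1)" using Q by simp
  finally show ?thesis by simp
qed

lemma dgamma:
  fixes c \<gamma> :: real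
  shows "((\<lambda>g. c / (1 + g\<^sup>2) ^ j) has_real_derivative (- 2 * real j * \<gamma> * c / (1 + \<gamma>\<^sup>2) ^ (j + 1))) (at \<gamma> within S)"
proof -
  have q0: "1 + \<gamma>\<^sup>2 \<noteq> 0" by (metis add_pos_nonneg zero_less_one zero_le_power2 less_irrefl)
  have "((\<lambda>g. c / (1 + g\<^sup>2) ^ j) has_real_derivative
      (- (c * (real j * (1 + \<gamma>\<^sup>2) ^ (j - 1) * (2 * \<gamma>)) / ((1 + \<gamma>\<^sup>2) ^ j * (1 + \<gamma>\<^sup>2) ^ j)))) (at \<gamma> within S)"
    using q0 by (auto intro!: derivative_eq_intros simp: power2_eq_square)
  moreover have "- (c * (real j * (1 + \<gamma>\<^sup>2) ^ (j - 1) * (2 * \<gamma>)) / ((1 + \<gamma>\<^sup>2) ^ j * (1 + \<gamma>\<^sup>2) ^ j))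
      = - 2 * real j * \<gamma> * c / (1 + \<gamma>\<^sup>2) ^ (j + 1)"
  proof (cases j)
    case 0 then show ?thesis by simp
  next
    case (Suc i) then show ?thesis using aux_pow[OF q0, of c "real j" i \<gamma>] by simp
  qed
  ultimately show ?thesis by simp
qed

lemma zero_on_deriv:
  fixes f :: "real \<Rightarrow> real"
  assumes "\<And>t. t \<ge> 0 \<Longrightarrow> f t = 0" "t \<ge> 0"
  shows "(f has_real_derivative 0) (at t within {0..})"
  by (rule has_field_derivative_transform_within[OF DERIV_const zero_less_one]) (use assms in auto)




theorem lemma2p2:
  fixes cr dr :: "nat \<Rightarrow> real \<Rightarrow> real"
    and w1 w2 w1t w1g w2t w2g :: "real \<Rightarrow> real \<Rightarrow> real"
  assumes c0: "is_inverse_laplace (cr 0) (\<lambda>\<xi>. cfun 0 \<xi> / dfun 0 \<xi> - 1)"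
    and d0: "\<forall>t\<ge>0. dr 0 t = 0"
    and cj: "\<forall>j\<ge>1. is_inverse_laplace (cr j) (\<lambda>\<xi>. cfun j \<xi> / dfun 0 \<xi>)"
    and dj: "\<forall>j\<ge>1. is_inverse_laplace (dr j) (\<lambda>\<xi>. dfun j \<xi> / dfun 0 \<xi>)"
    and w1_t: "\<forall>t\<ge>0. \<forall>\<gamma>\<ge>0. ((\<lambda>s. w1 s \<gamma>) has_real_derivative w1t t \<gamma>) (at t within {0..})"
    and w1_g: "\<forall>t\<ge>0. \<forall>\<gamma>\<ge>0. ((\<lambda>g. w1 t g) has_real_derivative w1g t \<gamma>) (at \<gamma> within {0..})"
    and w2_t: "\<forall>t\<ge>0. \<forall>\<gamma>\<ge>0. ((\<lambda>s. w2 s \<gamma>) has_real_derivative w2t t \<gamma>) (at t within {0..})"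
    and w2_g: "\<forall>t\<ge>0. \<forall>\<gamma>\<ge>0. ((\<lambda>g. w2 t g) has_real_derivative w2g t \<gamma>) (at \<gamma> within {0..})"
    and pde1: "\<forall>t\<ge>0. \<forall>\<gamma>\<ge>0. w1t t \<gamma> - 4 * \<gamma> * w1g t \<gamma> + 10 * w1 t \<gamma>
                 - 10 / (1 + \<gamma>\<^sup>2) * w2 t \<gamma> = 130 * exp (- 23 * t)"
    and pde2: "\<forall>t\<ge>0. \<forall>\<gamma>\<ge>0. w2t t \<gamma> - 4 * \<gamma> * w2g t \<gamma> + 13 * w2 t \<gamma>
                 - 13 * w1 t \<gamma> = 130 * exp (- 23 * t)"
    and init1: "\<forall>\<gamma>\<ge>0. w1 0 \<gamma> = - 10 * \<gamma>\<^sup>2 / (1 + \<gamma>\<^sup>2)"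
    and init2: "\<forall>\<gamma>\<ge>0. w2 0 \<gamma> = 0"
  shows "(\<forall>k. ((\<lambda>t. cr k t * exp t) \<longlongrightarrow> 0) at_top \<and>
              ((\<lambda>t. dr k t * exp t) \<longlongrightarrow> 0) at_top) \<and>
         (\<forall>M::nat. M \<ge> 2 \<longrightarrow>
            (let A = (\<lambda>t \<gamma>. \<Sum>j\<le>M. cr j t / (1 + \<gamma>\<^sup>2) ^ j);
                 B = (\<lambda>t \<gamma>. \<Sum>j\<le>M. dr j t / (1 + \<gamma>\<^sup>2) ^ j);
                 \<alpha> = (\<lambda>t \<gamma>. w1 t \<gamma> - A t \<gamma>);
                 \<beta> = (\<lambda>t \<gamma>. w2 t \<gamma> - B t \<gamma>);
                 P = (\<lambda>t. 8 * real M * cr M t + 10 * dr M t);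
                 Q = (\<lambda>t. 8 * real M * dr M t)
             in \<forall>t\<ge>0. \<forall>\<gamma>\<ge>0. \<exists>\<alpha>t \<alpha>g \<beta>t \<beta>g.
                  ((\<lambda>s. \<alpha> s \<gamma>) has_real_derivative \<alpha>t) (at t within {0..}) \<and>
                  ((\<lambda>g. \<alpha> t g) has_real_derivative \<alpha>g) (at \<gamma> within {0..}) \<and>
                  ((\<lambda>s. \<beta> s \<gamma>) has_real_derivative \<beta>t) (at t within {0..}) \<and>
                  ((\<lambda>g. \<beta> t g) has_real_derivative \<beta>g) (at \<gamma> within {0..}) \<and>
                  \<alpha>t - 4 * \<gamma> * \<alpha>g + 10 * \<alpha> t \<gamma> - 10 / (1 + \<gamma>\<^sup>2) * \<beta> t \<gamma>
                    = P t / (1 + \<gamma>\<^sup>2) ^ (M + 1) \<and>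
                  \<beta>t - 4 * \<gamma> * \<beta>g + 13 * \<beta> t \<gamma> - 13 * \<alpha> t \<gamma>
                    = Q t / (1 + \<gamma>\<^sup>2) ^ (M + 1)))"
proof -
  define d0 where "d0 x = dfun 0 (complex_of_real x)" for x
  define Fv where "Fv j x = (if j = 0 then Re (cfun 0 (of_real x) / dfun 0 (of_real x) - 1)
                             else Re (cfun j (of_real x) / dfun 0 (of_real x)))" for j x
  define Gv where "Gv j x = (if j = 0 then 0 else Re (dfun j (of_real x) / dfun 0 (of_real x)))" for j x
  have cc: "continuous_on {0..} (cr j)" for j
  proof (cases "j = 0")
    case True then show ?thesis using inv_lap_LT(1)[OF c0] by simp
  next
    case False then have "is_inverse_laplace (cr j) (\<lambda>\<xi>. cfun j \<xi> / dfun 0 \<xi>)" using cj by simp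
    then show ?thesis by (rule inv_lap_LT(1))
  qed
  have LTc: "\<exists>\<sigma>. \<forall>x>\<sigma>. LT (cr j) x (Fv j x)" for j
  proof (cases "j = 0")
    case True then show ?thesis using inv_lap_LT(2)[OF c0] by (simp add: Fv_def)
  next
    case False then have "is_inverse_laplace (cr j) (\<lambda>\<xi>. cfun j \<xi> / dfun 0 \<xi>)" using cj by simp
    from inv_lap_LT(2)[OF this] show ?thesis using False by (simp add: Fv_def)
  qed
  have dr0: "dr 0 t = 0" if "t \<ge> 0" for t using d0 that by simp
  have cd: "continuous_on {0..} (dr j)" for j
  proof (cases "j = 0")
    case True
    have "continuous_on {0..} (dr 0)"
      by (rule continuous_on_eq[OF continuous_on_const]) (auto simp: dr0)
    then show ?thesis using True by simp
  next
    case False then have "is_inverse_laplace (dr j) (\<lambda>\<xi>. dfun j \<xi> / dfun 0 \<xi>)" using dj by simp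
    then show ?thesis by (rule inv_lap_LT(1))
  qed
  have LTd: "\<exists>\<sigma>. \<forall>x>\<sigma>. LT (dr j) x (Gv j x)" for j
  proof (cases "j = 0")
    case True
    have "LT (dr 0) x 0" for x
    proof -
      have "integral {0..T} (\<lambda>t. exp (-(x*t)) * dr 0 t) = 0" for T
        by (subst integral_cong[where g="\<lambda>t. 0"]) (auto simp: dr0)
      then show ?thesis unfolding LT_def by simp
    qed
    then show ?thesis using True by (simp add: Gv_def)
  next
    case False then have "is_inverse_laplace (dr j) (\<lambda>\<xi>. dfun j \<xi> / dfun 0 \<xi>)" using dj by simp
    from inv_lap_LT(2)[OF this] show ?thesis using False by (simp add: Gv_def)
  qed
  have rel0: "(x + 23) * Fv 0 x = 0 + (- 10)" if "x > 0" for x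
    using rel_0(1)[OF that] by (simp add: Fv_def mult.commute)
  have relC: "(x + (real (8 * Suc i) + 10)) * Fv (Suc i) x =
      real (8*i) * Fv i x + 10 * Gv i x + (if i = 0 then 10 else 0)" if x: "x > 0" for x i
  proof (cases "i = 0")
    case True then show ?thesis using rel_c[OF x, of 0] rel_0(2)[OF x]
      by (simp add: Fv_def Gv_def mult.commute add.assoc)
  next
    case False then show ?thesis using rel_c[OF x, of i]
      by (simp add: Fv_def Gv_def mult.commute add.assoc)
  qed
  have relD: "(x + (real (8 * Suc i) + 13)) * Gv (Suc i) x =
      13 * Fv (Suc i) x + real (8*i) * Gv i x" if x: "x > 0" for x i
  proof (cases "i = 0")
    case True then show ?thesis using rel_d[OF x, of 0]
      by (simp add: Fv_def Gv_def mult.commute add.assoc)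
  next
    case False then show ?thesis using rel_d[OF x, of i]
      by (simp add: Fv_def Gv_def mult.commute add.assoc)
  qed
  have D0: "(cr 0 has_real_derivative (0 - 23 * cr 0 t)) (at t within {0..})" if t: "t \<ge> 0" for t
  proof -
    obtain \<sigma> where \<sigma>: "\<And>x. x > \<sigma> \<Longrightarrow> LT (cr 0) x (Fv 0 x)" using LTc[of 0] by blast
    have eq: "cr 0 s = - 10 + integral {0..s} (\<lambda>u. 0 - 23 * cr 0 u)" if "s \<ge> 0" for s
    proof (rule ode_LT[OF cc continuous_on_const _ that, where \<sigma>="max \<sigma> 0" and F="Fv 0" and R="\<lambda>x. 0"])
      fix x assume x: "x > max \<sigma> 0"
      show "LT (cr 0) x (Fv 0 x) \<and> LT (\<lambda>u. 0) x 0 \<and> (x + 23) * Fv 0 x = 0 + - 10"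
        using \<sigma>[of x] LT_const[of x 0] rel0[of x] x by auto
    qed
    show ?thesis by (rule ode_LT_deriv[OF cc continuous_on_const eq t])
  qed
  have cr0: "cr 0 t = - 10 * exp (- 23 * t)" if t: "t \<ge> 0" for t
  proof -
    have "cr 0 0 = - 10"
    proof -
      obtain \<sigma> where \<sigma>: "\<And>x. x > \<sigma> \<Longrightarrow> LT (cr 0) x (Fv 0 x)" using LTc[of 0] by blast
      have "cr 0 0 = - 10 + integral {0..0} (\<lambda>u. 0 - 23 * cr 0 u)"
      proof (rule ode_LT[OF cc continuous_on_const _ order_refl, where \<sigma>="max \<sigma> 0" and F="Fv 0" and R="\<lambda>x. 0"])
        fix x assume x: "x > max \<sigma> 0"
        show "LT (cr 0) x (Fv 0 x) \<and> LT (\<lambda>u. 0) x 0 \<and> (x + 23) * Fv 0 x = 0 + - 10"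
          using \<sigma>[of x] LT_const[of x 0] rel0[of x] x by auto
      qed
      then show ?thesis by simp
    qed
    then show ?thesis using ode_const[OF D0 t] by simp
  qed
  have DC: "(cr (Suc i) has_real_derivative
      ((real (8*i) * cr i t + 10 * dr i t) - (real (8 * Suc i) + 10) * cr (Suc i) t)) (at t within {0..})"
    if t: "t \<ge> 0" for t i
  proof -
    obtain \<sigma>1 where \<sigma>1: "\<And>x. x > \<sigma>1 \<Longrightarrow> LT (cr (Suc i)) x (Fv (Suc i) x)" using LTc by blast
    obtain \<sigma>2 where \<sigma>2: "\<And>x. x > \<sigma>2 \<Longrightarrow> LT (cr i) x (Fv i x)" using LTc by blast
    obtain \<sigma>3 where \<sigma>3: "\<And>x. x > \<sigma>3 \<Longrightarrow> LT (dr i) x (Gv i x)" using LTd by blast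
    have cr': "continuous_on {0..} (\<lambda>s. real (8*i) * cr i s + 10 * dr i s)"
      by (intro continuous_intros cc cd)
    have eq: "cr (Suc i) s = (if i = 0 then 10 else 0) +
        integral {0..s} (\<lambda>u. (real (8*i) * cr i u + 10 * dr i u) - (real (8 * Suc i) + 10) * cr (Suc i) u)"
      if "s \<ge> 0" for s
    proof (rule ode_LT[OF cc cr' _ that, where \<sigma>="max (max \<sigma>1 \<sigma>2) (max \<sigma>3 0)" and F="Fv (Suc i)"
          and R="\<lambda>x. real (8*i) * Fv i x + 10 * Gv i x"])
      fix x assume x: "x > max (max \<sigma>1 \<sigma>2) (max \<sigma>3 0)"
      have "LT (\<lambda>s. real (8*i) * cr i s + 10 * dr i s) x (real (8*i) * Fv i x + 10 * Gv i x)"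
        using \<sigma>2[of x] \<sigma>3[of x] x by (intro LT_add LT_cmul cc cd continuous_intros) auto
      then show "LT (cr (Suc i)) x (Fv (Suc i) x) \<and>
          LT (\<lambda>s. real (8*i) * cr i s + 10 * dr i s) x (real (8*i) * Fv i x + 10 * Gv i x) \<and>
          (x + (real (8 * Suc i) + 10)) * Fv (Suc i) x = real (8*i) * Fv i x + 10 * Gv i x + (if i = 0 then 10 else 0)"
        using \<sigma>1[of x] relC[of x i] x by auto
    qed
    show ?thesis by (rule ode_LT_deriv[OF cc cr' eq t])
  qed
  have DD: "(dr (Suc i) has_real_derivative
      ((13 * cr (Suc i) t + real (8*i) * dr i t) - (real (8 * Suc i) + 13) * dr (Suc i) t)) (at t within {0..})"
    if t: "t \<ge> 0" for t i
  proof -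
    obtain \<sigma>1 where \<sigma>1: "\<And>x. x > \<sigma>1 \<Longrightarrow> LT (cr (Suc i)) x (Fv (Suc i) x)" using LTc by blast
    obtain \<sigma>2 where \<sigma>2: "\<And>x. x > \<sigma>2 \<Longrightarrow> LT (dr (Suc i)) x (Gv (Suc i) x)" using LTd by blast
    obtain \<sigma>3 where \<sigma>3: "\<And>x. x > \<sigma>3 \<Longrightarrow> LT (dr i) x (Gv i x)" using LTd by blast
    have cr': "continuous_on {0..} (\<lambda>s. 13 * cr (Suc i) s + real (8*i) * dr i s)"
      by (intro continuous_intros cc cd)
    have eq: "dr (Suc i) s = 0 +
        integral {0..s} (\<lambda>u. (13 * cr (Suc i) u + real (8*i) * dr i u) - (real (8 * Suc i) + 13) * dr (Suc i) u)"
      if "s \<ge> 0" for s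
    proof (rule ode_LT[OF cd cr' _ that, where \<sigma>="max (max \<sigma>1 \<sigma>2) (max \<sigma>3 0)" and F="Gv (Suc i)"
          and R="\<lambda>x. 13 * Fv (Suc i) x + real (8*i) * Gv i x"])
      fix x assume x: "x > max (max \<sigma>1 \<sigma>2) (max \<sigma>3 0)"
      have "LT (\<lambda>s. 13 * cr (Suc i) s + real (8*i) * dr i s) x (13 * Fv (Suc i) x + real (8*i) * Gv i x)"
        using \<sigma>1[of x] \<sigma>3[of x] x by (intro LT_add LT_cmul cc cd continuous_intros) auto
      then show "LT (dr (Suc i)) x (Gv (Suc i) x) \<and>
          LT (\<lambda>s. 13 * cr (Suc i) s + real (8*i) * dr i s) x (13 * Fv (Suc i) x + real (8*i) * Gv i x) \<and>
          (x + (real (8 * Suc i) + 13)) * Gv (Suc i) x = 13 * Fv (Suc i) x + real (8*i) * Gv i x + 0"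
        using \<sigma>2[of x] relD[of x i] x by auto
    qed
    show ?thesis by (rule ode_LT_deriv[OF cd cr' eq t])
  qed
  have bnd: "\<exists>C. \<forall>t\<ge>0. \<bar>cr j t\<bar> \<le> C * exp (-(2*t)) \<and> \<bar>dr j t\<bar> \<le> C * exp (-(2*t))" for j
  proof (induction j)
    case 0
    show ?case
    proof (intro exI allI impI conjI)
      fix t :: real assume t: "t \<ge> 0"
      have "exp (- 23 * t) \<le> exp (-(2*t))" using t by simp
      then show "\<bar>cr 0 t\<bar> \<le> 10 * exp (-(2*t))" using cr0[OF t] by (simp add: abs_mult)
      show "\<bar>dr 0 t\<bar> \<le> 10 * exp (-(2*t))" using dr0[OF t] by simp
    qed
  next
    case (Suc i)
    then obtain C where C: "\<And>t. t \<ge> 0 \<Longrightarrow> \<bar>cr i t\<bar> \<le> C * exp (-(2*t)) \<and> \<bar>dr i t\<bar> \<le> C * exp (-(2*t))" by blast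
    have rb1: "\<bar>real (8*i) * cr i t + 10 * dr i t\<bar> \<le> (real (8*i) * C + 10 * C) * exp (-(2*t))" if t: "t \<ge> 0" for t
    proof -
      have "\<bar>real (8*i) * cr i t + 10 * dr i t\<bar> \<le> real (8*i) * \<bar>cr i t\<bar> + 10 * \<bar>dr i t\<bar>"
        by (rule order_trans[OF abs_triangle_ineq]) (simp add: abs_mult)
      also have "\<dots> \<le> real (8*i) * (C * exp (-(2*t))) + 10 * (C * exp (-(2*t)))"
        using C[OF t] by (intro add_mono mult_left_mono) auto
      finally show ?thesis by (simp add: algebra_simps)
    qed
    have cr1: "continuous_on {0..} (\<lambda>s. real (8*i) * cr i s + 10 * dr i s)" by (intro continuous_intros cc cd)
    obtain C1 where C1: "\<And>t. t \<ge> 0 \<Longrightarrow> \<bar>cr (Suc i) t\<bar> \<le> C1 * exp (-(2*t))"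
      using decay[OF cr1 DC _ rb1] by fastforce
    have rb2: "\<bar>13 * cr (Suc i) t + real (8*i) * dr i t\<bar> \<le> (13 * C1 + real (8*i) * C) * exp (-(2*t))" if t: "t \<ge> 0" for t
    proof -
      have "\<bar>13 * cr (Suc i) t + real (8*i) * dr i t\<bar> \<le> 13 * \<bar>cr (Suc i) t\<bar> + real (8*i) * \<bar>dr i t\<bar>"
        by (rule order_trans[OF abs_triangle_ineq]) (simp add: abs_mult)
      also have "\<dots> \<le> 13 * (C1 * exp (-(2*t))) + real (8*i) * (C * exp (-(2*t)))"
        using C[OF t] C1[OF t] by (intro add_mono mult_left_mono) auto
      finally show ?thesis by (simp add: algebra_simps)
    qed
    have cr2: "continuous_on {0..} (\<lambda>s. 13 * cr (Suc i) s + real (8*i) * dr i s)" by (intro continuous_intros cc cd)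
    obtain C2 where C2: "\<And>t. t \<ge> 0 \<Longrightarrow> \<bar>dr (Suc i) t\<bar> \<le> C2 * exp (-(2*t))"
      using decay[OF cr2 DD _ rb2] by fastforce
    show ?case
    proof (intro exI allI impI conjI)
      fix t :: real assume t: "t \<ge> 0"
      show "\<bar>cr (Suc i) t\<bar> \<le> max C1 C2 * exp (-(2*t))"
        using C1[OF t] by (rule order_trans) (simp add: mult_right_mono)
      show "\<bar>dr (Suc i) t\<bar> \<le> max C1 C2 * exp (-(2*t))"
        using C2[OF t] by (rule order_trans) (simp add: mult_right_mono)
    qed
  qed
  have part1: "((\<lambda>t. cr k t * exp t) \<longlongrightarrow> 0) at_top \<and> ((\<lambda>t. dr k t * exp t) \<longlongrightarrow> 0) at_top" for k
  proof -
    obtain C where C: "\<And>t. t \<ge> 0 \<Longrightarrow> \<bar>cr k t\<bar> \<le> C * exp (-(2*t)) \<and> \<bar>dr k t\<bar> \<le> C * exp (-(2*t))"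
      using bnd[of k] by blast
    have lim: "((\<lambda>t. C * exp (-(1*t))) \<longlongrightarrow> 0) at_top"
      by (rule tendsto_mult_right_zero[OF exp_decay]) simp
    have e: "C * exp (-(2*t)) * exp t = C * exp (-(1*t))" for t
      by (simp add: mult.assoc exp_add[symmetric])
    show ?thesis
    proof
      show "((\<lambda>t. cr k t * exp t) \<longlongrightarrow> 0) at_top"
      proof (rule Lim_null_comparison[OF _ lim])
        show "\<forall>\<^sub>F t in at_top. norm (cr k t * exp t) \<le> C * exp (-(1*t))"
          unfolding eventually_at_top_linorder
        proof (intro exI[of _ 0] allI impI)
          fix t :: real assume t: "t \<ge> 0"
          have "norm (cr k t * exp t) = \<bar>cr k t\<bar> * exp t" by (simp add: abs_mult)
          also have "\<dots> \<le> C * exp (-(2*t)) * exp t" using C[OF t] by (intro mult_right_mono) auto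
          finally show "norm (cr k t * exp t) \<le> C * exp (-(1*t))" unfolding e .
        qed
      qed
      show "((\<lambda>t. dr k t * exp t) \<longlongrightarrow> 0) at_top"
      proof (rule Lim_null_comparison[OF _ lim])
        show "\<forall>\<^sub>F t in at_top. norm (dr k t * exp t) \<le> C * exp (-(1*t))"
          unfolding eventually_at_top_linorder
        proof (intro exI[of _ 0] allI impI)
          fix t :: real assume t: "t \<ge> 0"
          have "norm (dr k t * exp t) = \<bar>dr k t\<bar> * exp t" by (simp add: abs_mult)
          also have "\<dots> \<le> C * exp (-(2*t)) * exp t" using C[OF t] by (intro mult_right_mono) auto
          finally show "norm (dr k t * exp t) \<le> C * exp (-(1*t))" unfolding e .
        qed
      qed
    qed
  qed
  have part2: "\<exists>\<alpha>t \<alpha>g \<beta>t \<beta>g.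
      ((\<lambda>s. w1 s \<gamma> - (\<Sum>j\<le>M. cr j s / (1 + \<gamma>\<^sup>2) ^ j)) has_real_derivative \<alpha>t) (at t within {0..}) \<and>
      ((\<lambda>g. w1 t g - (\<Sum>j\<le>M. cr j t / (1 + g\<^sup>2) ^ j)) has_real_derivative \<alpha>g) (at \<gamma> within {0..}) \<and>
      ((\<lambda>s. w2 s \<gamma> - (\<Sum>j\<le>M. dr j s / (1 + \<gamma>\<^sup>2) ^ j)) has_real_derivative \<beta>t) (at t within {0..}) \<and>
      ((\<lambda>g. w2 t g - (\<Sum>j\<le>M. dr j t / (1 + g\<^sup>2) ^ j)) has_real_derivative \<beta>g) (at \<gamma> within {0..}) \<and>
      \<alpha>t - 4 * \<gamma> * \<alpha>g + 10 * (w1 t \<gamma> - (\<Sum>j\<le>M. cr j t / (1 + \<gamma>\<^sup>2) ^ j))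
        - 10 / (1 + \<gamma>\<^sup>2) * (w2 t \<gamma> - (\<Sum>j\<le>M. dr j t / (1 + \<gamma>\<^sup>2) ^ j))
        = (8 * real M * cr M t + 10 * dr M t) / (1 + \<gamma>\<^sup>2) ^ (M + 1) \<and>
      \<beta>t - 4 * \<gamma> * \<beta>g + 13 * (w2 t \<gamma> - (\<Sum>j\<le>M. dr j t / (1 + \<gamma>\<^sup>2) ^ j))
        - 13 * (w1 t \<gamma> - (\<Sum>j\<le>M. cr j t / (1 + \<gamma>\<^sup>2) ^ j))
        = (8 * real M * dr M t) / (1 + \<gamma>\<^sup>2) ^ (M + 1)"
    if t: "t \<ge> 0" and g: "\<gamma> \<ge> 0" for t \<gamma> :: real and M :: nat
  proof -
    define q where "q = 1 + \<gamma>\<^sup>2"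
    define c' where "c' j = (if j = 0 then 0 - 23 * cr 0 t else
        (real (8*(j-1)) * cr (j-1) t + 10 * dr (j-1) t) - (real (8 * j) + 10) * cr j t)" for j
    define d' where "d' j = (if j = 0 then 0 else
        (13 * cr j t + real (8*(j-1)) * dr (j-1) t) - (real (8 * j) + 13) * dr j t)" for j
    have Dcr: "(cr j has_real_derivative c' j) (at t within {0..})" for j
    proof (cases j)
      case 0 then show ?thesis using D0[OF t] by (simp add: c'_def)
    next
      case (Suc i) then show ?thesis using DC[OF t, of i] by (simp add: c'_def)
    qed
    have Ddr: "(dr j has_real_derivative d' j) (at t within {0..})" for j
    proof (cases j)
      case 0 then show ?thesis using zero_on_deriv[OF dr0 t] by (simp add: d'_def)
    next
      case (Suc i) then show ?thesis using DD[OF t, of i] by (simp add: d'_def)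
    qed
    define S1 where "S1 = (\<Sum>j\<le>M. c' j / q ^ j)"
    define S2 where "S2 = (\<Sum>j\<le>M. - 2 * real j * \<gamma> * cr j t / q ^ (j + 1))"
    define S3 where "S3 = (\<Sum>j\<le>M. cr j t / q ^ j)"
    define S4 where "S4 = (\<Sum>j\<le>M. dr j t / q ^ j)"
    define T1 where "T1 = (\<Sum>j\<le>M. d' j / q ^ j)"
    define T2 where "T2 = (\<Sum>j\<le>M. - 2 * real j * \<gamma> * dr j t / q ^ (j + 1))"
    have X1: "((\<lambda>s. w1 s \<gamma> - (\<Sum>j\<le>M. cr j s / (1 + \<gamma>\<^sup>2) ^ j)) has_real_derivative (w1t t \<gamma> - S1)) (at t within {0..})"
      unfolding S1_def q_def using w1_t t g by (intro DERIV_diff DERIV_sum DERIV_cdivide Dcr) auto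
    have X2: "((\<lambda>g. w1 t g - (\<Sum>j\<le>M. cr j t / (1 + g\<^sup>2) ^ j)) has_real_derivative (w1g t \<gamma> - S2)) (at \<gamma> within {0..})"
      unfolding S2_def q_def using w1_g t g by (intro DERIV_diff DERIV_sum dgamma) auto
    have X3: "((\<lambda>s. w2 s \<gamma> - (\<Sum>j\<le>M. dr j s / (1 + \<gamma>\<^sup>2) ^ j)) has_real_derivative (w2t t \<gamma> - T1)) (at t within {0..})"
      unfolding T1_def q_def using w2_t t g by (intro DERIV_diff DERIV_sum DERIV_cdivide Ddr) auto
    have X4: "((\<lambda>g. w2 t g - (\<Sum>j\<le>M. dr j t / (1 + g\<^sup>2) ^ j)) has_real_derivative (w2g t \<gamma> - T2)) (at \<gamma> within {0..})"
      unfolding T2_def q_def using w2_g t g by (intro DERIV_diff DERIV_sum dgamma) auto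
    have q0: "q > 0" unfolding q_def by (simp add: add_pos_nonneg)
    have E0: "- 13 * cr 0 t = 130 * exp (- 23 * t)" using cr0[OF t] by simp
    have G1: "S1 - 4 * \<gamma> * S2 + 10 * S3 + (\<Sum>j\<le>M. 0 / q^j) + (\<Sum>j\<le>M. (- 10 * dr j t) / q^(j+1))
        = (c' 0 + 10 * cr 0 t + 0) - (8 * real M * cr M t - (- 10 * dr M t)) / q^(M+1)"
      unfolding S1_def S2_def S3_def
      by (rule gen_pde[OF q_def]) (auto simp: c'_def algebra_simps)
    have G1s: "(\<Sum>j\<le>M. (- 10 * dr j t) / q^(j+1)) = - (10 / q * S4)"
      unfolding S4_def by (simp add: sum_distrib_left sum_negf[symmetric] field_simps)
    have G2: "T1 - 4 * \<gamma> * T2 + 13 * S4 + (\<Sum>j\<le>M. (- 13 * cr j t) / q^j) + (\<Sum>j\<le>M. 0 / q^(j+1))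
        = (d' 0 + 13 * dr 0 t + (- 13 * cr 0 t)) - (8 * real M * dr M t - 0) / q^(M+1)"
      unfolding T1_def T2_def S4_def
      by (rule gen_pde[OF q_def]) (auto simp: d'_def algebra_simps)
    have G2s: "(\<Sum>j\<le>M. (- 13 * cr j t) / q^j) = - (13 * S3)"
      unfolding S3_def by (simp add: sum_distrib_left sum_negf[symmetric])
    have p1: "w1t t \<gamma> - 4 * \<gamma> * w1g t \<gamma> + 10 * w1 t \<gamma> - 10 / q * w2 t \<gamma> = 130 * exp (- 23 * t)"
      using pde1 t g unfolding q_def by auto
    have p2: "w2t t \<gamma> - 4 * \<gamma> * w2g t \<gamma> + 13 * w2 t \<gamma> - 13 * w1 t \<gamma> = 130 * exp (- 23 * t)"
      using pde2 t g by auto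
    have E1: "(w1t t \<gamma> - S1) - 4 * \<gamma> * (w1g t \<gamma> - S2) + 10 * (w1 t \<gamma> - S3) - 10 / q * (w2 t \<gamma> - S4)
        = (8 * real M * cr M t + 10 * dr M t) / q ^ (M + 1)"
    proof -
      have "c' 0 + 10 * cr 0 t + 0 = 130 * exp (- 23 * t)" using E0 by (simp add: c'_def)
      then have "S1 - 4 * \<gamma> * S2 + 10 * S3 - 10 / q * S4 = 130 * exp (- 23 * t) - (8 * real M * cr M t + 10 * dr M t) / q^(M+1)"
        using G1 G1s by simp
      moreover have "(w1t t \<gamma> - S1) - 4 * \<gamma> * (w1g t \<gamma> - S2) + 10 * (w1 t \<gamma> - S3) - 10 / q * (w2 t \<gamma> - S4)
         = (w1t t \<gamma> - 4 * \<gamma> * w1g t \<gamma> + 10 * w1 t \<gamma> - 10 / q * w2 t \<gamma>) - (S1 - 4 * \<gamma> * S2 + 10 * S3 - 10 / q * S4)"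
        by (simp add: algebra_simps diff_divide_distrib)
      ultimately show ?thesis using p1 by simp
    qed
    have E2: "(w2t t \<gamma> - T1) - 4 * \<gamma> * (w2g t \<gamma> - T2) + 13 * (w2 t \<gamma> - S4) - 13 * (w1 t \<gamma> - S3)
        = (8 * real M * dr M t) / q ^ (M + 1)"
    proof -
      have "d' 0 + 13 * dr 0 t + (- 13 * cr 0 t) = 130 * exp (- 23 * t)" using E0 dr0[OF t] by (simp add: d'_def)
      then have "T1 - 4 * \<gamma> * T2 + 13 * S4 - 13 * S3 = 130 * exp (- 23 * t) - (8 * real M * dr M t) / q^(M+1)"
        using G2 G2s by simp
      then show ?thesis using p2 by (simp add: algebra_simps)
    qed
    show ?thesis
      apply (rule exI[of _ "w1t t \<gamma> - S1"], rule exI[of _ "w1g t \<gamma> - S2"],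
             rule exI[of _ "w2t t \<gamma> - T1"], rule exI[of _ "w2g t \<gamma> - T2"])
      using X1 X2 X3 X4 E1 E2 unfolding S3_def S4_def q_def by blast
  qed
  show ?thesis
  proof (rule conjI)
    show "\<forall>k. ((\<lambda>t. cr k t * exp t) \<longlongrightarrow> 0) at_top \<and> ((\<lambda>t. dr k t * exp t) \<longlongrightarrow> 0) at_top"
      using part1 by blast
  next
    show "\<forall>M::nat. M \<ge> 2 \<longrightarrow> (let A = (\<lambda>t \<gamma>. \<Sum>j\<le>M. cr j t / (1 + \<gamma>\<^sup>2) ^ j);
                 B = (\<lambda>t \<gamma>. \<Sum>j\<le>M. dr j t / (1 + \<gamma>\<^sup>2) ^ j);
                 \<alpha> = (\<lambda>t \<gamma>. w1 t \<gamma> - A t \<gamma>);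
                 \<beta> = (\<lambda>t \<gamma>. w2 t \<gamma> - B t \<gamma>);
                 P = (\<lambda>t. 8 * real M * cr M t + 10 * dr M t);
                 Q = (\<lambda>t. 8 * real M * dr M t)
             in \<forall>t\<ge>0. \<forall>\<gamma>\<ge>0. \<exists>\<alpha>t \<alpha>g \<beta>t \<beta>g.
                  ((\<lambda>s. \<alpha> s \<gamma>) has_real_derivative \<alpha>t) (at t within {0..}) \<and>
                  ((\<lambda>g. \<alpha> t g) has_real_derivative \<alpha>g) (at \<gamma> within {0..}) \<and>
                  ((\<lambda>s. \<beta> s \<gamma>) has_real_derivative \<beta>t) (at t within {0..}) \<and>
                  ((\<lambda>g. \<beta> t g) has_real_derivative \<beta>g) (at \<gamma> within {0..}) \<and>
                  \<alpha>t - 4 * \<gamma> * \<alpha>g + 10 * \<alpha> t \<gamma> - 10 / (1 + \<gamma>\<^sup>2) * \<beta> t \<gamma>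
                    = P t / (1 + \<gamma>\<^sup>2) ^ (M + 1) \<and>
                  \<beta>t - 4 * \<gamma> * \<beta>g + 13 * \<beta> t \<gamma> - 13 * \<alpha> t \<gamma>
                    = Q t / (1 + \<gamma>\<^sup>2) ^ (M + 1))"
      unfolding Let_def using part2 by blast
  qed
qed


end
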